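(* Let $n\geq 4$, and let $\Omega_n\subset\mathbb{R}^{2n-3}$, the associated polygons, and $\Gamma_n$ be as described in the context. Define $\Theta:\mathbb{R}^5\to\mathbb{R}$ by $$\Theta(u_1,u_2,u_3,u_4,u_5)=u_1u_2(u_4^2+u_5^2-u_3^2)+u_4u_5(u_1^2+u_2^2-u_3^2),$$ and $\gamma:\Omega_n\to\mathbb{R}^{n-3}$ by $\gamma(\omega)=(\gamma_1(\omega),\dots,\gamma_{n-3}(\omega))$, where $\gamma_k(\omega)=\Theta(t_k,x_k,t_{k+1},x_{k+1},t_{k+2})$ for $\omega=(t_1,x_1,t_2,x_2,\dots,t_{n-2},x_{n-2},t_{n-1})$. Then $\Gamma_n=\gamma^{-1}(\{0\})$, and $\Gamma_n$ is a differentiable submanifold of dimension $n$ of $\mathbb{R}^{2n-3}$.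
   Context: Let $\mathcal V=\{(x,y,z)\in\mathbb{R}^3: 0<x<y+z,\ 0<y<x+z,\ 0<z<x+y\}$. For $(t,x,s)\in\mathcal V$ let $\alpha(t,x,s)\in\,]0,\pi[$ be the angle opposite the side of length $x$ in a triangle with side lengths $t,x,s$, i.e. $\alpha(t,x,s)=\arccos\frac{t^2+s^2-x^2}{2ts}$. Let $$\Omega_n=\Big\{\omega=(t_1,x_1,t_2,x_2,\dots,t_{n-2},x_{n-2},t_{n-1})\in(\mathbb{R}_{>0})^{2n-3}:\ (t_k,x_k,t_{k+1})\in\mathcal V \text{ for } k=1,\dots,n-2,\ \sum_{k=1}^{n-2}\alpha(t_k,x_k,t_{k+1})<2\pi\Big\}.$$ To $\omega\in\Omega_n$ associate the planar polygon $(M_1,\dots,M_n)$ with $M_n=O$ the origin, $M_k=t_k(\cos\theta_k,\sin\theta_k)$ for $1\le k\le n-1$, where $\theta_1=0$ and $\theta_{k+1}=\theta_k+\alpha(t_k,x_k,t_{k+1})$. Thus $t_k=M_nM_k$ and $x_k=M_kM_{k+1}$; the sides of the polygon have lengths $t_1,x_1,\dots,x_{n-2},t_{n-1}$, and $t_2,\dots,t_{n-2}$ are the lengths of the diagonals from $M_n$. The paper identifies $\Omega_n$ with the space of isometry classes of polygons star-shaped with respect to the vertex $M_n$. $\Gamma_n$ denotes the set of $\omega\in\Omega_n$ whose associated polygon is inscribable, i.e. all its vertices lie on a common circle. *)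

theory Defs
  imports "HOL-Analysis.Analysis"
begin

text \<open>C^k on an open set via iterated directional derivatives (equivalent to the
usual definition in finite dimension).\<close>
fun Ck_on :: "nat \<Rightarrow> 'a::real_normed_vector set \<Rightarrow> ('a \<Rightarrow> 'b::real_normed_vector) \<Rightarrow> bool" where
  "Ck_on 0 U f = continuous_on U f"
| "Ck_on (Suc k) U f =
     (f differentiable_on U \<and>
      (\<forall>v. Ck_on k U (\<lambda>x. frechet_derivative f (at x) v)))"

definition smooth_on :: "'a::real_normed_vector set \<Rightarrow> ('a \<Rightarrow> 'b::real_normed_vector) \<Rightarrow> bool" where
  "smooth_on U f \<longleftrightarrow> (\<forall>k. Ck_on k U f)"

definition diffeo_between :: "'a::real_normed_vector set \<Rightarrow> 'a set \<Rightarrow> ('a \<Rightarrow> 'a) \<Rightarrow> bool" where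
  "diffeo_between U V \<phi> \<longleftrightarrow>
     (\<exists>\<psi>. \<phi> ` U = V \<and> \<psi> ` V = U \<and> (\<forall>x\<in>U. \<psi> (\<phi> x) = x) \<and> (\<forall>y\<in>V. \<phi> (\<psi> y) = y)
          \<and> smooth_on U \<phi> \<and> smooth_on V \<psi>)"

definition smooth_submanifold :: "'a::euclidean_space set \<Rightarrow> nat \<Rightarrow> bool" where
  "smooth_submanifold S d \<longleftrightarrow>
     (\<forall>p\<in>S. \<exists>U V \<phi> L. open U \<and> p \<in> U \<and> open V \<and> diffeo_between U V \<phi> \<and>
        subspace L \<and> dim L = d \<and> \<phi> ` (S \<inter> U) = V \<inter> L)"

text \<open>A point omega = (t_1,x_1,...,x_{n-2},t_{n-1}) is given as a coordinate sequence
c :: nat => real with c 0 = t_1, c 1 = x_1, c 2 = t_2, ...\<close>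

definition tc :: "(nat \<Rightarrow> real) \<Rightarrow> nat \<Rightarrow> real" where
  "tc c k = c (2 * k - 2)"

definition xc :: "(nat \<Rightarrow> real) \<Rightarrow> nat \<Rightarrow> real" where
  "xc c k = c (2 * k - 1)"

definition in_V :: "real \<Rightarrow> real \<Rightarrow> real \<Rightarrow> bool" where
  "in_V x y z \<longleftrightarrow> 0 < x \<and> x < y + z \<and> 0 < y \<and> y < x + z \<and> 0 < z \<and> z < x + y"

definition alpha :: "real \<Rightarrow> real \<Rightarrow> real \<Rightarrow> real" where
  "alpha t x s = arccos ((t\<^sup>2 + s\<^sup>2 - x\<^sup>2) / (2 * t * s))"

definition in_Omega :: "nat \<Rightarrow> (nat \<Rightarrow> real) \<Rightarrow> bool" where
  "in_Omega n c \<longleftrightarrow>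
     (\<forall>i < 2 * n - 3. 0 < c i) \<and>
     (\<forall>k\<in>{1..n-2}. in_V (tc c k) (xc c k) (tc c (Suc k))) \<and>
     (\<Sum>k=1..n-2. alpha (tc c k) (xc c k) (tc c (Suc k))) < 2 * pi"

definition theta :: "(nat \<Rightarrow> real) \<Rightarrow> nat \<Rightarrow> real" where
  "theta c k = (\<Sum>j=1..<k. alpha (tc c j) (xc c j) (tc c (Suc j)))"

definition vertex :: "nat \<Rightarrow> (nat \<Rightarrow> real) \<Rightarrow> nat \<Rightarrow> complex" where
  "vertex n c k = (if k = n then 0 else complex_of_real (tc c k) * cis (theta c k))"

definition inscribable :: "nat \<Rightarrow> (nat \<Rightarrow> real) \<Rightarrow> bool" where
  "inscribable n c \<longleftrightarrow> (\<exists>z r. 0 < r \<and> (\<forall>k\<in>{1..n}. dist (vertex n c k) z = r))"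

text \<open>Identification of R^(2n-3) with real^'m via an enumeration idx of the coordinates.\<close>
definition coords :: "(nat \<Rightarrow> 'm) \<Rightarrow> real^'m \<Rightarrow> nat \<Rightarrow> real" where
  "coords idx \<omega> = (\<lambda>i. \<omega> $ idx i)"

definition Omega_set :: "(nat \<Rightarrow> 'm::finite) \<Rightarrow> nat \<Rightarrow> (real^'m) set" where
  "Omega_set idx n = {\<omega>. in_Omega n (coords idx \<omega>)}"

definition Gamma_set :: "(nat \<Rightarrow> 'm::finite) \<Rightarrow> nat \<Rightarrow> (real^'m) set" where
  "Gamma_set idx n = {\<omega> \<in> Omega_set idx n. inscribable n (coords idx \<omega>)}"

definition Theta :: "real \<Rightarrow> real \<Rightarrow> real \<Rightarrow> real \<Rightarrow> real \<Rightarrow> real" where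
  "Theta u1 u2 u3 u4 u5 = u1 * u2 * (u4\<^sup>2 + u5\<^sup>2 - u3\<^sup>2) + u4 * u5 * (u1\<^sup>2 + u2\<^sup>2 - u3\<^sup>2)"

definition gamma_k :: "(nat \<Rightarrow> real) \<Rightarrow> nat \<Rightarrow> real" where
  "gamma_k c k = Theta (tc c k) (xc c k) (tc c (k+1)) (xc c (k+1)) (tc c (k+2))"

end

theory Submission
  imports Defs
begin

inductive nice :: "(real^'m) set \<Rightarrow> (real^'m \<Rightarrow> real) \<Rightarrow> bool" for U where
  nconst: "nice U (\<lambda>x. c)"
| ncoord: "nice U (\<lambda>x. x $ i)"
| nadd: "nice U f \<Longrightarrow> nice U g \<Longrightarrow> nice U (\<lambda>x. f x + g x)"
| nmult: "nice U f \<Longrightarrow> nice U g \<Longrightarrow> nice U (\<lambda>x. f x * g x)"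
| ninv: "nice U f \<Longrightarrow> (\<forall>x\<in>U. f x \<noteq> 0) \<Longrightarrow> nice U (\<lambda>x. inverse (f x))"
| nsqrt: "nice U f \<Longrightarrow> (\<forall>x\<in>U. f x > 0) \<Longrightarrow> nice U (\<lambda>x. sqrt (f x))"
| ncong: "nice U f \<Longrightarrow> (\<forall>x\<in>U. f x = g x) \<Longrightarrow> nice U g"

lemmas nI = nice.nconst nice.ncoord nice.nadd nice.nmult nice.ninv nice.nsqrt

lemma nice_deriv:
  assumes "nice U f" "open U"
  shows "\<exists>f'. (\<forall>x\<in>U. (f has_derivative f' x) (at x)) \<and> (\<forall>v. nice U (\<lambda>x. f' x v))"
  using assms
proof (induction rule: nice.induct)
  case (nconst c)
  then show ?case by (intro exI[of _ "\<lambda>x v. 0"]) (auto intro: nI)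
next
  case (ncoord i)
  show ?case
    by (intro exI[of _ "\<lambda>x v. v $ i"]) (auto intro: nI bounded_linear.has_derivative[OF bounded_linear_vec_nth] has_derivative_ident)
next
  case (nadd f g)
  then obtain f' g' where f: "\<forall>x\<in>U. (f has_derivative f' x) (at x)" "\<forall>v. nice U (\<lambda>x. f' x v)"
    and g: "\<forall>x\<in>U. (g has_derivative g' x) (at x)" "\<forall>v. nice U (\<lambda>x. g' x v)" by blast
  show ?case
    by (intro exI[of _ "\<lambda>x v. f' x v + g' x v"]) (use f g in \<open>auto intro: nI has_derivative_add\<close>)
next
  case (nmult f g)
  then obtain f' g' where f: "\<forall>x\<in>U. (f has_derivative f' x) (at x)" "\<forall>v. nice U (\<lambda>x. f' x v)"
    and g: "\<forall>x\<in>U. (g has_derivative g' x) (at x)" "\<forall>v. nice U (\<lambda>x. g' x v)" by blast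
  have "nice U (\<lambda>x. f x * g' x v + f' x v * g x)" for v
    by (rule nice.nadd[OF nice.nmult nice.nmult]) (use f g nmult.hyps in auto)
  then show ?case
    by (intro exI[of _ "\<lambda>x v. f x * g' x v + f' x v * g x"]) (use f g in \<open>auto intro: has_derivative_mult\<close>)
next
  case (ninv f)
  then obtain f' where f: "\<forall>x\<in>U. (f has_derivative f' x) (at x)" "\<forall>v. nice U (\<lambda>x. f' x v)" by blast
  have "nice U (\<lambda>x. inverse (f x))" using ninv by (auto intro: nI)
  then show ?case
  proof (intro exI[of _ "\<lambda>x v. (-1) * (inverse (f x) * f' x v * inverse (f x))"] conjI ballI allI)
    fix x assume "x \<in> U"
    then have "((\<lambda>x. inverse (f x)) has_derivative (\<lambda>v. - (inverse (f x) * f' x v * inverse (f x)))) (at x)"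
      using f ninv by (intro Deriv.has_derivative_inverse) auto
    then show "((\<lambda>x. inverse (f x)) has_derivative (\<lambda>v. (-1) * (inverse (f x) * f' x v * inverse (f x)))) (at x)"
      by simp
  next
    fix v show "nice U (\<lambda>x. (-1) * (inverse (f x) * f' x v * inverse (f x)))"
      using f \<open>nice U (\<lambda>x. inverse (f x))\<close> by (intro nice.nmult nice.nconst) auto
  qed
next
  case (nsqrt f)
  then obtain f' where f: "\<forall>x\<in>U. (f has_derivative f' x) (at x)" "\<forall>v. nice U (\<lambda>x. f' x v)" by blast
  have s: "nice U (\<lambda>x. sqrt (f x))" using nsqrt by (auto intro: nI)
  have "nice U (\<lambda>x. inverse (sqrt (f x) * 2))"
    using nsqrt by (intro nice.ninv nice.nmult s) (auto intro: nI)
  then have "nice U (\<lambda>x. f' x v * inverse (sqrt (f x) * 2))" for v using f by (intro nice.nmult) auto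
  moreover have "\<forall>x\<in>U. ((\<lambda>x. sqrt (f x)) has_derivative (\<lambda>v. f' x v * inverse (sqrt (f x) * 2))) (at x)"
  proof
    fix x assume "x \<in> U"
    then have "((\<lambda>x. sqrt (f x)) has_derivative (\<lambda>v. f' x v * (inverse (sqrt (f x)) / 2))) (at x)"
      using f nsqrt \<open>x \<in> U\<close> by (intro has_derivative_real_sqrt) auto
    then show "((\<lambda>x. sqrt (f x)) has_derivative (\<lambda>v. f' x v * inverse (sqrt (f x) * 2))) (at x)"
      by (simp add: field_simps)
  qed
  ultimately show ?case by (intro exI[of _ "\<lambda>x v. f' x v * inverse (sqrt (f x) * 2)"]) blast
next
  case (ncong f g)
  then obtain f' where f: "\<forall>x\<in>U. (f has_derivative f' x) (at x)" "\<forall>v. nice U (\<lambda>x. f' x v)" by blast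
  show ?case
    by (intro exI[of _ f']) (use f ncong in \<open>auto intro: has_derivative_transform_within_open\<close>)
qed


lemma has_derivative_vecI:
  fixes F :: "real^'m \<Rightarrow> real^'n"
  assumes "\<And>j. ((\<lambda>x. F x $ j) has_derivative (\<lambda>v. G v $ j)) (at x)"
  shows "(F has_derivative G) (at x)"
proof -
  have "((\<lambda>x. F x \<bullet> i) has_derivative (\<lambda>v. G v \<bullet> i)) (at x)" if "i \<in> Basis" for i
  proof -
    have "\<exists>j. i = axis j 1" using that by (simp add: Basis_vec_def)
    then obtain j where "i = axis j 1" by blast
    then show ?thesis using assms[of j] by (simp add: cart_eq_inner_axis[symmetric])
  qed
  then show ?thesis by (subst has_derivative_componentwise_within) auto
qed

lemma nice_Ck:
  fixes F :: "real^'m \<Rightarrow> real^'n"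
  assumes "open U" "\<And>j. nice U (\<lambda>x. F x $ j)"
  shows "Ck_on k U F"
  using assms(2)
proof (induction k arbitrary: F)
  case 0
  have "\<exists>f'. (\<forall>x\<in>U. ((\<lambda>x. F x $ j) has_derivative f' x) (at x))" for j
    using nice_deriv[OF 0 assms(1)] by blast
  then obtain f' where f': "\<And>j x. x \<in> U \<Longrightarrow> ((\<lambda>x. F x $ j) has_derivative f' j x) (at x)"
    by metis
  have "(F has_derivative (\<lambda>v. \<chi> j. f' j x v)) (at x)" if "x \<in> U" for x
    by (rule has_derivative_vecI) (simp add: f' that)
  then show ?case
    by (auto intro!: has_derivative_continuous continuous_at_imp_continuous_on)
next
  case (Suc k)
  have "\<exists>f'. (\<forall>x\<in>U. ((\<lambda>x. F x $ j) has_derivative f' x) (at x)) \<and> (\<forall>v. nice U (\<lambda>x. f' x v))" for j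
    using nice_deriv[OF Suc.prems assms(1)] by blast
  then obtain f' where f': "\<And>j x. x \<in> U \<Longrightarrow> ((\<lambda>x. F x $ j) has_derivative f' j x) (at x)"
    and n': "\<And>j v. nice U (\<lambda>x. f' j x v)"
    by metis
  have D: "(F has_derivative (\<lambda>v. \<chi> j. f' j x v)) (at x)" if "x \<in> U" for x
    by (rule has_derivative_vecI) (simp add: f' that)
  have "F differentiable_on U"
    using D by (meson differentiable_at_withinI differentiable_def differentiable_on_def)
  moreover have "Ck_on k U (\<lambda>x. frechet_derivative F (at x) v)" for v
  proof (rule Suc.IH)
    fix j
    show "nice U (\<lambda>x. frechet_derivative F (at x) v $ j)"
      by (rule nice.ncong[OF n'[of j v]]) (auto simp: frechet_derivative_at[OF D, symmetric])
  qed
  ultimately show ?case by simp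
qed

lemma nice_smooth:
  fixes F :: "real^'m \<Rightarrow> real^'n"
  assumes "open U" "\<And>j. nice U (\<lambda>x. F x $ j)"
  shows "smooth_on U F"
  using nice_Ck[OF assms] by (simp add: smooth_on_def)

lemma alpha_props:
  assumes "in_V t x s"
  shows "-1 < (t\<^sup>2 + s\<^sup>2 - x\<^sup>2) / (2 * t * s)" "(t\<^sup>2 + s\<^sup>2 - x\<^sup>2) / (2 * t * s) < 1"
    "cos (alpha t x s) = (t\<^sup>2 + s\<^sup>2 - x\<^sup>2) / (2 * t * s)"
    "0 < alpha t x s" "alpha t x s < pi" "sin (alpha t x s) > 0"
    "(2 * t * s * sin (alpha t x s))\<^sup>2 = 4 * t\<^sup>2 * s\<^sup>2 - (t\<^sup>2 + s\<^sup>2 - x\<^sup>2)\<^sup>2"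
proof -
  from assms have t: "t > 0" and s: "s > 0" and x: "x > 0" and "x < t + s" "t < x + s" "s < t + x"
    by (auto simp: in_V_def)
  have ts: "2 * t * s > 0" using t s by simp
  have "(t - s)\<^sup>2 < x\<^sup>2"
  proof -
    have "\<bar>t - s\<bar> < x" using \<open>t < x + s\<close> \<open>s < t + x\<close> by linarith
    then have "\<bar>t - s\<bar>\<^sup>2 < x\<^sup>2" using x by (intro power_strict_mono) auto
    then show ?thesis by simp
  qed
  then have "t\<^sup>2 + s\<^sup>2 - x\<^sup>2 < 2 * t * s" by (simp add: power2_eq_square algebra_simps)
  then show y1: "(t\<^sup>2 + s\<^sup>2 - x\<^sup>2) / (2 * t * s) < 1" using ts by simp
  have "x\<^sup>2 < (t + s)\<^sup>2" using x \<open>x < t + s\<close> by (intro power_strict_mono) auto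
  then have "-(2 * t * s) < t\<^sup>2 + s\<^sup>2 - x\<^sup>2" by (simp add: power2_eq_square algebra_simps)
  then show y0: "-1 < (t\<^sup>2 + s\<^sup>2 - x\<^sup>2) / (2 * t * s)" using ts by (simp add: field_simps)
  show c: "cos (alpha t x s) = (t\<^sup>2 + s\<^sup>2 - x\<^sup>2) / (2 * t * s)"
    unfolding alpha_def using y0 y1 by simp
  show a0: "0 < alpha t x s" "alpha t x s < pi"
    unfolding alpha_def using y0 y1 arccos_lt_bounded by auto
  then show sp: "sin (alpha t x s) > 0" by (simp add: sin_gt_zero)
  have "(2 * t * s * sin (alpha t x s))\<^sup>2 = (2 * t * s)\<^sup>2 * (1 - (cos (alpha t x s))\<^sup>2)"
    by (simp add: power_mult_distrib sin_squared_eq)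
  also have "\<dots> = (2 * t * s)\<^sup>2 - (2 * t * s)\<^sup>2 * ((t\<^sup>2 + s\<^sup>2 - x\<^sup>2) / (2 * t * s))\<^sup>2"
    unfolding c by (simp add: algebra_simps)
  also have "(2 * t * s)\<^sup>2 * ((t\<^sup>2 + s\<^sup>2 - x\<^sup>2) / (2 * t * s))\<^sup>2 = (t\<^sup>2 + s\<^sup>2 - x\<^sup>2)\<^sup>2"
    using t s by (simp add: power_divide)
  also have "(2 * t * s)\<^sup>2 = 4 * t\<^sup>2 * s\<^sup>2" by (simp add: power_mult_distrib)
  finally show "(2 * t * s * sin (alpha t x s))\<^sup>2 = 4 * t\<^sup>2 * s\<^sup>2 - (t\<^sup>2 + s\<^sup>2 - x\<^sup>2)\<^sup>2" .
qed

lemma three_point: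
  fixes a b u v w :: real
  shows "(a * cos u + b * sin u) * sin (w - v) - (a * cos v + b * sin v) * sin (w - u)
       + (a * cos w + b * sin w) * sin (v - u) = 0"
  by (simp add: sin_diff algebra_simps)

lemma key_alg:
  fixes s1 s2 P Q u1 u2 u4 u5 :: real
  assumes "s1 > 0" "s2 > 0" "u1 > 0" "u2 > 0" "u4 > 0" "u5 > 0"
    and "s1\<^sup>2 = 4 * u1\<^sup>2 * u2\<^sup>2 - P\<^sup>2" "s2\<^sup>2 = 4 * u4\<^sup>2 * u5\<^sup>2 - Q\<^sup>2"
  shows "s2 * P + s1 * Q = 0 \<longleftrightarrow> u4 * u5 * P + u1 * u2 * Q = 0"
proof
  assume h: "s2 * P + s1 * Q = 0"
  then have "s2 * P = - s1 * Q" by linarith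
  then have "(s2 * P)\<^sup>2 = (s1 * Q)\<^sup>2" by (simp add: power2_eq_square)
  then have "s2\<^sup>2 * P\<^sup>2 = s1\<^sup>2 * Q\<^sup>2" by (simp add: power_mult_distrib)
  then have "(4 * u4\<^sup>2 * u5\<^sup>2 - Q\<^sup>2) * P\<^sup>2 = (4 * u1\<^sup>2 * u2\<^sup>2 - P\<^sup>2) * Q\<^sup>2" using assms by simp
  then have "(u4 * u5 * P - u1 * u2 * Q) * (u4 * u5 * P + u1 * u2 * Q) = 0"
    by (simp add: algebra_simps power2_eq_square)
  then consider "u4 * u5 * P + u1 * u2 * Q = 0" | "u4 * u5 * P = u1 * u2 * Q" by auto
  then show "u4 * u5 * P + u1 * u2 * Q = 0"
  proof cases
    case 2
    have "u4 * u5 * (P * Q) = u1 * u2 * Q\<^sup>2" using 2 by (simp add: power2_eq_square algebra_simps)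
    moreover have "u4 * u5 > 0" "u1 * u2 * Q\<^sup>2 \<ge> 0" using assms by auto
    ultimately have "P * Q \<ge> 0" by (metis zero_le_mult_iff not_le)
    have e: "s2 * P = - s1 * Q" using h by linarith
    have "s2 * (P * Q) = - s1 * Q\<^sup>2" using arg_cong[OF e, of "\<lambda>z. z * Q"]
      by (simp add: power2_eq_square mult.assoc)
    moreover have "s2 * (P * Q) \<ge> 0" using \<open>P * Q \<ge> 0\<close> assms by simp
    ultimately have "s1 * Q\<^sup>2 \<le> 0" by linarith
    then have "Q\<^sup>2 \<le> 0" using assms by (simp add: mult_le_0_iff)
    then have "Q\<^sup>2 = 0" by (meson antisym zero_le_power2)
    then have "Q = 0" by simp
    then have "P = 0" using 2 assms by simp
    then show ?thesis using \<open>Q = 0\<close> by simp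
  qed simp
next
  assume h: "u4 * u5 * P + u1 * u2 * Q = 0"
  define K where "K = u1 * u2/(u4 * u5)"
  have K: "K > 0" using assms by (simp add: K_def)
  have "u4 * u5 * P = - (u1 * u2 * Q)" using h by linarith
  then have PK: "P = - K * Q" using assms unfolding K_def by (simp add: field_simps)
  have KK: "u1 * u2 = K * (u4 * u5)" using assms by (simp add: K_def)
  have "s1\<^sup>2 = 4 * (u1 * u2)\<^sup>2 - (K * Q)\<^sup>2" using assms(7) PK by (simp add: power_mult_distrib)
  also have "\<dots> = K\<^sup>2 * (4 * u4\<^sup>2 * u5\<^sup>2 - Q\<^sup>2)" unfolding KK by (simp add: power_mult_distrib algebra_simps)
  finally have "s1\<^sup>2 = K\<^sup>2 * s2\<^sup>2" using assms(8) by simp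
  then have "s1\<^sup>2 = (K * s2)\<^sup>2" by (simp add: power_mult_distrib)
  then have "s1 = K * s2" using K assms by (simp add: power2_eq_iff_nonneg)
  then show "s2 * P + s1 * Q = 0" using PK by (simp add: algebra_simps)
qed

lemma R_Theta:
  assumes V1: "in_V u1 u2 u3" and V2: "in_V u3 u4 u5"
  shows "u1 * sin (alpha u3 u4 u5) - u3 * sin (alpha u1 u2 u3 + alpha u3 u4 u5) + u5 * sin (alpha u1 u2 u3) = 0
         \<longleftrightarrow> Theta u1 u2 u3 u4 u5 = 0"
proof -
  define a where "a = alpha u1 u2 u3"
  define b where "b = alpha u3 u4 u5"
  have p: "u1 > 0" "u2 > 0" "u3 > 0" "u4 > 0" "u5 > 0" using V1 V2 by (auto simp: in_V_def)
  note A = alpha_props[OF V1, folded a_def] and B = alpha_props[OF V2, folded b_def]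
  define s1 where "s1 = 2 * u1 * u3 * sin a"
  define s2 where "s2 = 2 * u3 * u5 * sin b"
  define P where "P = u1\<^sup>2 + u2\<^sup>2 - u3\<^sup>2"
  define Q where "Q = u4\<^sup>2 + u5\<^sup>2 - u3\<^sup>2"
  have s1p: "s1 > 0" using A p by (simp add: s1_def)
  have s2p: "s2 > 0" using B p by (simp add: s2_def)
  have s1sq: "s1\<^sup>2 = 4 * u1\<^sup>2 * u2\<^sup>2 - P\<^sup>2"
    using A(7) unfolding s1_def P_def by (simp add: power2_eq_square algebra_simps)
  have s2sq: "s2\<^sup>2 = 4 * u4\<^sup>2 * u5\<^sup>2 - Q\<^sup>2"
    using B(7) unfolding s2_def Q_def by (simp add: power2_eq_square algebra_simps)
  have eq: "4 * u1 * u3 * u5 * (u1 * sin b - u3 * sin (a + b) + u5 * sin a) = s2 * P + s1 * Q"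
  proof -
    have ca: "2 * u1 * u3 * cos a = u1\<^sup>2 + u3\<^sup>2 - u2\<^sup>2" using A(3) p by (simp add: field_simps)
    have cb: "2 * u3 * u5 * cos b = u3\<^sup>2 + u5\<^sup>2 - u4\<^sup>2" using B(3) p by (simp add: field_simps)
    have "4 * u1 * u3 * u5 * (u1 * sin b - u3 * sin (a + b) + u5 * sin a)
       = 2 * u1\<^sup>2 * s2 - s1 * (2 * u3 * u5 * cos b) - s2 * (2 * u1 * u3 * cos a) + 2 * u5\<^sup>2 * s1"
      unfolding s1_def s2_def by (simp add: sin_add power2_eq_square algebra_simps)
    also have "\<dots> = s2 * P + s1 * Q" unfolding ca cb P_def Q_def by (simp add: algebra_simps)
    finally show ?thesis .
  qed
  have "u1 * sin b - u3 * sin (a + b) + u5 * sin a = 0 \<longleftrightarrow> s2 * P + s1 * Q = 0"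
    using p by (simp flip: eq)
  also have "\<dots> \<longleftrightarrow> u4 * u5 * P + u1 * u2 * Q = 0"
    by (rule key_alg[OF s1p s2p p(1,2,4,5) s1sq s2sq])
  also have "\<dots> \<longleftrightarrow> Theta u1 u2 u3 u4 u5 = 0"
    unfolding Theta_def P_def Q_def by (simp add: algebra_simps)
  finally show ?thesis unfolding a_def b_def .
qed

lemma theta_1: "theta c 1 = 0" by (simp add: theta_def)

lemma theta_Suc: "k \<ge> 1 \<Longrightarrow> theta c (Suc k) = theta c k + alpha (tc c k) (xc c k) (tc c (Suc k))"
  by (simp add: theta_def)

lemma dist_cmod_iff:
  fixes u z :: complex
  shows "dist u z = cmod z \<longleftrightarrow> (Re u)\<^sup>2 + (Im u)\<^sup>2 = 2 * (Re u * Re z + Im u * Im z)"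
proof -
  have "dist u z = cmod z \<longleftrightarrow> (dist u z)\<^sup>2 = (cmod z)\<^sup>2"
    by (simp add: power2_eq_iff_nonneg)
  also have "\<dots> \<longleftrightarrow> (Re u - Re z)\<^sup>2 + (Im u - Im z)\<^sup>2 = (Re z)\<^sup>2 + (Im z)\<^sup>2"
    by (simp add: dist_norm cmod_power2)
  also have "\<dots> \<longleftrightarrow> (Re u)\<^sup>2 + (Im u)\<^sup>2 = 2 * (Re u * Re z + Im u * Im z)"
    by (simp add: power2_eq_square algebra_simps)
  finally show ?thesis .
qed

lemma Omega_pos:
  assumes "in_Omega n c" "1 \<le> k" "k \<le> n - 1" "n \<ge> 3"
  shows "tc c k > 0"
  using assms unfolding in_Omega_def tc_def by auto

lemma Omega_V:
  assumes "in_Omega n c" "1 \<le> k" "k \<le> n - 2"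
  shows "in_V (tc c k) (xc c k) (tc c (Suc k))"
  using assms unfolding in_Omega_def by auto

lemma sc2: "((x::real) * cos t)\<^sup>2 + (x * sin t)\<^sup>2 = x\<^sup>2"
  by (simp add: power_mult_distrib flip: distrib_left)

lemma inscr_ab:
  assumes om: "in_Omega n c" and n: "n \<ge> 3"
  shows "inscribable n c \<longleftrightarrow> (\<exists>a b. \<forall>k\<in>{1..n-1}. tc c k = a * cos (theta c k) + b * sin (theta c k))"
proof
  assume "inscribable n c"
  then obtain z r where r: "0 < r" "\<forall>k\<in>{1..n}. dist (vertex n c k) z = r"
    unfolding inscribable_def by blast
  have "dist 0 z = r" using r(2)[rule_format, of n] n by (simp add: vertex_def)
  then have rz: "r = cmod z" by simp
  show "\<exists>a b. \<forall>k\<in>{1..n-1}. tc c k = a * cos (theta c k) + b * sin (theta c k)"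
  proof (intro exI ballI)
    fix k assume k: "k \<in> {1..n-1}"
    have tp: "tc c k > 0" using Omega_pos[OF om _ _ n] k by auto
    have "dist (vertex n c k) z = cmod z" using r(2) k rz by auto
    moreover have "vertex n c k = complex_of_real (tc c k) * cis (theta c k)"
      using k by (auto simp: vertex_def)
    ultimately have "(tc c k * cos (theta c k))\<^sup>2 + (tc c k * sin (theta c k))\<^sup>2 = 2 * (tc c k * cos (theta c k) * Re z + tc c k * sin (theta c k) * Im z)"
      by (simp add: dist_cmod_iff)
    then have "(tc c k)\<^sup>2 = tc c k * (2 * (cos (theta c k) * Re z + sin (theta c k) * Im z))"
      unfolding sc2 by (simp add: algebra_simps)
    then have "tc c k = 2 * (cos (theta c k) * Re z + sin (theta c k) * Im z)"
      using tp by (simp add: power2_eq_square)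
    then show "tc c k = (2 * Re z) * cos (theta c k) + (2 * Im z) * sin (theta c k)"
      by (simp add: algebra_simps)
  qed
next
  assume "\<exists>a b. \<forall>k\<in>{1..n-1}. tc c k = a * cos (theta c k) + b * sin (theta c k)"
  then obtain a b where ab: "\<forall>k\<in>{1..n-1}. tc c k = a * cos (theta c k) + b * sin (theta c k)" by blast
  define z where "z = Complex (a/2) (b/2)"
  have "tc c 1 > 0" using Omega_pos[OF om _ _ n] n by auto
  moreover have "tc c 1 = a * cos (theta c 1) + b * sin (theta c 1)" using ab n by auto
  ultimately have "a \<noteq> 0" unfolding theta_1 by simp
  then have zp: "cmod z > 0" by (simp add: z_def complex_eq_iff)
  have "\<forall>k\<in>{1..n}. dist (vertex n c k) z = cmod z"
  proof
    fix k assume k: "k \<in> {1..n}"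
    show "dist (vertex n c k) z = cmod z"
    proof (cases "k = n")
      case True then show ?thesis by (simp add: vertex_def)
    next
      case False
      then have k': "k \<in> {1..n-1}" using k by auto
      have "(tc c k)\<^sup>2 = tc c k * (2 * (cos (theta c k) * Re z + sin (theta c k) * Im z))"
      proof -
        have "2 * (cos (theta c k) * Re z + sin (theta c k) * Im z) = tc c k"
          using ab k' by (simp add: z_def algebra_simps)
        then show ?thesis by (simp add: power2_eq_square)
      qed
      then have "(tc c k * cos (theta c k))\<^sup>2 + (tc c k * sin (theta c k))\<^sup>2 = 2 * (tc c k * cos (theta c k) * Re z + tc c k * sin (theta c k) * Im z)"
        unfolding sc2 by (simp add: algebra_simps)
      then show ?thesis using False
        by (simp add: vertex_def dist_cmod_iff)
    qed
  qed
  then show "inscribable n c" unfolding inscribable_def using zp by blast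
qed

definition AA :: "(nat \<Rightarrow> real) \<Rightarrow> nat \<Rightarrow> real" where
  "AA c k = alpha (tc c k) (xc c k) (tc c (Suc k))"

definition RR :: "(nat \<Rightarrow> real) \<Rightarrow> nat \<Rightarrow> real" where
  "RR c k = tc c k * sin (AA c (Suc k)) - tc c (Suc k) * sin (AA c k + AA c (Suc k))
          + tc c (Suc (Suc k)) * sin (AA c k)"

lemma theta_Suc': "k \<ge> 1 \<Longrightarrow> theta c (Suc k) = theta c k + AA c k"
  using theta_Suc by (simp add: AA_def)

lemma AA_props:
  assumes "in_Omega n c" "1 \<le> k" "k \<le> n - 2"
  shows "sin (AA c k) > 0"
  using alpha_props(6)[OF Omega_V[OF assms]] by (simp add: AA_def)

lemma chain:
  assumes om: "in_Omega n c" and n: "n \<ge> 3"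
  shows "(\<exists>a b. \<forall>k\<in>{1..n-1}. tc c k = a * cos (theta c k) + b * sin (theta c k))
     \<longleftrightarrow> (\<forall>k\<in>{1..n-3}. RR c k = 0)"
proof
  assume "\<exists>a b. \<forall>k\<in>{1..n-1}. tc c k = a * cos (theta c k) + b * sin (theta c k)"
  then obtain a b where ab: "\<And>k. k\<in>{1..n-1} \<Longrightarrow> tc c k = a * cos (theta c k) + b * sin (theta c k)" by blast
  show "\<forall>k\<in>{1..n-3}. RR c k = 0"
  proof
    fix k assume k: "k \<in> {1..n-3}"
    have t1: "theta c (Suc k) = theta c k + AA c k" using k by (simp add: theta_Suc')
    have t2: "theta c (Suc (Suc k)) = theta c k + AA c k + AA c (Suc k)" using k t1 by (simp add: theta_Suc')
    have e1: "tc c k = a * cos (theta c k) + b * sin (theta c k)" using k by (intro ab) auto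
    have e2: "tc c (Suc k) = a * cos (theta c (Suc k)) + b * sin (theta c (Suc k))" using k by (intro ab) auto
    have e3: "tc c (Suc (Suc k)) = a * cos (theta c (Suc (Suc k))) + b * sin (theta c (Suc (Suc k)))" using k by (intro ab) auto
    have "tc c k * sin (theta c (Suc (Suc k)) - theta c (Suc k))
       - tc c (Suc k) * sin (theta c (Suc (Suc k)) - theta c k)
       + tc c (Suc (Suc k)) * sin (theta c (Suc k) - theta c k) = 0"
      using three_point[where a=a and b=b and u="theta c k" and v="theta c (Suc k)" and w="theta c (Suc (Suc k))"]
      by (simp only: e1[symmetric] e2[symmetric] e3[symmetric])
    moreover have "theta c (Suc (Suc k)) - theta c (Suc k) = AA c (Suc k)"
      "theta c (Suc (Suc k)) - theta c k = AA c k + AA c (Suc k)"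
      "theta c (Suc k) - theta c k = AA c k" using t1 t2 by simp_all
    ultimately have "RR c k = 0" unfolding RR_def by simp
    then show "RR c k = 0" .
  qed
next
  assume R: "\<forall>k\<in>{1..n-3}. RR c k = 0"
  define a where "a = tc c 1"
  define b where "b = (tc c 2 - tc c 1 * cos (AA c 1)) / sin (AA c 1)"
  define f where "f = (\<lambda>t. a * cos t + b * sin t)"
  have s1: "sin (AA c 1) > 0" using AA_props[OF om, of 1] n by auto
  have P: "f (theta c (Suc j)) = tc c (Suc j) \<and> f (theta c (Suc (Suc j))) = tc c (Suc (Suc j))"
    if "Suc (Suc j) \<le> n - 1" for j
    using that
  proof (induction j)
    case 0
    have "theta c (Suc 0) = 0" using theta_1 by simp
    moreover have "theta c 2 = AA c 1" using theta_Suc'[of 1 c] theta_1 by (simp add: numeral_2_eq_2)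
    ultimately show ?case using s1 by (simp add: f_def a_def b_def numeral_2_eq_2)
  next
    case (Suc j)
    then have IH: "f (theta c (Suc j)) = tc c (Suc j)" "f (theta c (Suc (Suc j))) = tc c (Suc (Suc j))" by auto
    define k where "k = Suc j"
    have k: "k \<in> {1..n-3}" using Suc.prems by (auto simp: k_def)
    have sk: "sin (AA c k) > 0" using AA_props[OF om, of k] k by auto
    have t1: "theta c (Suc k) = theta c k + AA c k" using k by (simp add: theta_Suc')
    have t2: "theta c (Suc (Suc k)) = theta c k + AA c k + AA c (Suc k)" using k t1 by (simp add: theta_Suc')
    have tp: "f (theta c k) * sin (theta c (Suc (Suc k)) - theta c (Suc k))
       - f (theta c (Suc k)) * sin (theta c (Suc (Suc k)) - theta c k)
       + f (theta c (Suc (Suc k))) * sin (theta c (Suc k) - theta c k) = 0"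
      unfolding f_def by (rule three_point)
    have "RR c k = 0" using R k by auto
    then have "tc c k * sin (AA c (Suc k)) - tc c (Suc k) * sin (AA c k + AA c (Suc k))
          + tc c (Suc (Suc k)) * sin (AA c k) = 0" by (simp add: RR_def)
    moreover have "tc c k * sin (AA c (Suc k)) - tc c (Suc k) * sin (AA c k + AA c (Suc k))
          + f (theta c (Suc (Suc k))) * sin (AA c k) = 0"
      using tp IH unfolding t1 t2 k_def[symmetric] by (simp add: algebra_simps)
    ultimately have "f (theta c (Suc (Suc k))) * sin (AA c k) = tc c (Suc (Suc k)) * sin (AA c k)"
      by linarith
    then have "f (theta c (Suc (Suc k))) = tc c (Suc (Suc k))" using sk by simp
    then show ?case using IH by (simp add: k_def)
  qed
  have "\<forall>k\<in>{1..n-1}. tc c k = f (theta c k)"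
  proof
    fix k assume k: "k \<in> {1..n-1}"
    show "tc c k = f (theta c k)"
    proof (cases "k \<le> n - 2")
      case True
      then obtain j where "k = Suc j" using k by (cases k) auto
      then show ?thesis using P[of j] True k by auto
    next
      case False
      then have "k = Suc (Suc (n - 3))" using k n by auto
      then show ?thesis using P[of "n-3"] n by auto
    qed
  qed
  then show "\<exists>a b. \<forall>k\<in>{1..n-1}. tc c k = a * cos (theta c k) + b * sin (theta c k)"
    unfolding f_def by blast
qed

lemma partA:
  assumes om: "in_Omega n c" and n: "n \<ge> 4"
  shows "inscribable n c \<longleftrightarrow> (\<forall>k\<in>{1..n-3}. gamma_k c k = 0)"
proof -
  have "inscribable n c \<longleftrightarrow> (\<forall>k\<in>{1..n-3}. RR c k = 0)"
    using inscr_ab[OF om] chain[OF om] n by simp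
  also have "\<dots> \<longleftrightarrow> (\<forall>k\<in>{1..n-3}. gamma_k c k = 0)"
  proof (intro ball_cong refl)
    fix k assume k: "k \<in> {1..n-3}"
    have V1: "in_V (tc c k) (xc c k) (tc c (Suc k))" using Omega_V[OF om, of k] k by auto
    have V2: "in_V (tc c (Suc k)) (xc c (Suc k)) (tc c (Suc (Suc k)))" using Omega_V[OF om, of "Suc k"] k by auto
    show "RR c k = 0 \<longleftrightarrow> gamma_k c k = 0"
      using R_Theta[OF V1 V2] by (simp add: RR_def AA_def gamma_k_def)
  qed
  finally show ?thesis .
qed

lemma thales:
  fixes a1 a2 b1 b2 z1 z2 :: real
  assumes "a1\<^sup>2 + a2\<^sup>2 = 2 * (a1 * z1 + a2 * z2)" "b1\<^sup>2 + b2\<^sup>2 = 2 * (b1 * z1 + b2 * z2)"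
    "a1 * b2 - a2 * b1 \<noteq> 0" "a1 * b1 + a2 * b2 = a1\<^sup>2 + a2\<^sup>2"
  shows "b1 = 2 * z1 \<and> b2 = 2 * z2"
proof -
  define w1 where "w1 = b1 - 2 * z1"
  define w2 where "w2 = b2 - 2 * z2"
  have e1: "a1 * w1 + a2 * w2 = 0" using assms(1,4) unfolding w1_def w2_def by (simp add: algebra_simps)
  have e2: "b1 * w1 + b2 * w2 = 0" using assms(2) unfolding w1_def w2_def by (simp add: algebra_simps power2_eq_square)
  have "(a1 * b2 - a2 * b1) * w1 = b2 * (a1 * w1 + a2 * w2) - a2 * (b1 * w1 + b2 * w2)" by (simp add: algebra_simps)
  then have "w1 = 0" using e1 e2 assms(3) by simp
  have "(a1 * b2 - a2 * b1) * w2 = a1 * (b1 * w1 + b2 * w2) - b1 * (a1 * w1 + a2 * w2)" by (simp add: algebra_simps)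
  then have "w2 = 0" using e1 e2 assms(3) by simp
  show ?thesis using \<open>w1 = 0\<close> \<open>w2 = 0\<close> unfolding w1_def w2_def by simp
qed

lemma cmod_cis_diff:
  "(cmod (complex_of_real s * cis (u + A) - complex_of_real t * cis u))\<^sup>2 = s\<^sup>2 + t\<^sup>2 - 2 * s * t * cos A"
proof -
  have "(cmod (complex_of_real s * cis (u + A) - complex_of_real t * cis u))\<^sup>2
      = (s * cos (u + A) - t * cos u)\<^sup>2 + (s * sin (u + A) - t * sin u)\<^sup>2"
    by (simp add: cmod_power2)
  also have "\<dots> = ((s * cos (u + A))\<^sup>2 + (s * sin (u + A))\<^sup>2) + ((t * cos u)\<^sup>2 + (t * sin u)\<^sup>2)
      - 2 * s * t * (cos (u + A) * cos u + sin (u + A) * sin u)"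
    by (simp add: power2_eq_square algebra_simps)
  also have "\<dots> = s\<^sup>2 + t\<^sup>2 - 2 * s * t * (cos (u + A) * cos u + sin (u + A) * sin u)"
    by (simp only: sc2)
  also have "cos (u + A) * cos u + sin (u + A) * sin u = cos A"
    using cos_diff[of "u + A" u] by simp
  finally show ?thesis by simp
qed

context
  fixes n c
  assumes om: "in_Omega n c" and n: "n \<ge> 4"
begin

lemma theta_split: "j \<le> j' \<Longrightarrow> theta c j' = theta c j + (\<Sum>i=j..<j'. AA c i)" if "1 \<le> j"
proof -
  assume "j \<le> j'"
  have "theta c j' = (\<Sum>i=1..<j'. AA c i)" by (simp add: theta_def AA_def)
  also have "\<dots> = (\<Sum>i=1..<j. AA c i) + (\<Sum>i=j..<j'. AA c i)"
    using that \<open>j \<le> j'\<close> by (simp add: sum.atLeastLessThan_concat)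
  also have "(\<Sum>i=1..<j. AA c i) = theta c j" by (simp add: theta_def AA_def)
  finally show ?thesis .
qed

lemma theta_last: "theta c (n - 1) < 2 * pi"
proof -
  have "{1..<n-1} = {1..n-2}" using n by auto
  then show ?thesis using om unfolding in_Omega_def theta_def by simp
qed

lemma AA_pos: "1 \<le> k \<Longrightarrow> k \<le> n - 2 \<Longrightarrow> AA c k > 0 \<and> AA c k < pi"
  using alpha_props(4,5)[OF Omega_V[OF om]] by (simp add: AA_def)

lemma theta_nonneg: "k \<le> n - 1 \<Longrightarrow> theta c k \<ge> 0"
  unfolding theta_def using AA_pos by (intro sum_nonneg) (auto simp: AA_def less_imp_le)

lemma vertex_eq: "1 \<le> j \<Longrightarrow> j \<le> n - 1 \<Longrightarrow> vertex n c j = complex_of_real (tc c j) * cis (theta c j)"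
  by (simp add: vertex_def)

lemma vertex_distinct:
  assumes "1 \<le> j" "j < j'" "j' \<le> n - 1" "vertex n c j = vertex n c j'"
  shows False
proof -
  have tj: "tc c j > 0" "tc c j' > 0" using Omega_pos[OF om] assms n by auto
  have d: "theta c j' = theta c j + (\<Sum>i=j..<j'. AA c i)" by (rule theta_split) (use assms in auto)
  have "(\<Sum>i=j..<j'. AA c i) > 0"
    by (rule sum_pos) (use assms AA_pos in auto)
  moreover have "theta c j' \<le> theta c (n - 1)"
  proof -
    have "(\<Sum>i=j'..<n-1. AA c i) \<ge> 0"
      by (rule sum_nonneg) (use assms AA_pos in \<open>auto intro: less_imp_le\<close>)
    moreover have "theta c (n - 1) = theta c j' + (\<Sum>i=j'..<n-1. AA c i)"
      by (rule theta_split) (use assms in auto)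
    ultimately show ?thesis by linarith
  qed
  ultimately have d0: "0 < theta c j' - theta c j" "theta c j' - theta c j < 2 * pi"
    using d theta_last theta_nonneg[of j] assms by linarith+
  have e: "complex_of_real (tc c j) * cis (theta c j) = complex_of_real (tc c j') * cis (theta c j')"
    using assms(4) vertex_eq[of j] vertex_eq[of j'] assms(1-3) by simp
  then have "cmod (complex_of_real (tc c j) * cis (theta c j)) = cmod (complex_of_real (tc c j') * cis (theta c j'))"
    by simp
  then have "tc c j = tc c j'" using tj by (simp add: norm_mult)
  then have "cis (theta c j) = cis (theta c j')" using e tj by simp
  then have cs: "cos (theta c j) = cos (theta c j')" "sin (theta c j) = sin (theta c j')"
    by (metis cis.sel(1), metis cis.sel(2))
  have "cos (theta c j' - theta c j) = (cos (theta c j'))\<^sup>2 + (sin (theta c j'))\<^sup>2"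
    unfolding cos_diff cs power2_eq_square ..
  then have "cos (theta c j' - theta c j) = 1" by simp
  then obtain m :: nat where "theta c j' - theta c j = m * 2 * pi \<or> theta c j' - theta c j = - (m * 2 * pi)"
    by (auto simp: cos_one_2pi)
  moreover have "real m * 2 * pi \<ge> 0" by simp
  moreover have "m = 0 \<or> real m * 2 * pi \<ge> 2 * pi"
  proof (cases "m = 0")
    case False
    then have "real m \<ge> 1" by simp
    then have "real m * (2 * pi) \<ge> 1 * (2 * pi)" by (intro mult_right_mono) auto
    then show ?thesis by simp
  qed simp
  ultimately show False using d0 by auto
qed


lemma vertex_facts:
  assumes "1 \<le> j" "j \<le> n - 2"
  defines "A \<equiv> vertex n c j" and "B \<equiv> vertex n c (Suc j)"
  shows "(Re A)\<^sup>2 + (Im A)\<^sup>2 = (tc c j)\<^sup>2" "(Re B)\<^sup>2 + (Im B)\<^sup>2 = (tc c (Suc j))\<^sup>2"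
    "(Re B - Re A)\<^sup>2 + (Im B - Im A)\<^sup>2 = (xc c j)\<^sup>2"
    "Re A * Im B - Im A * Re B \<noteq> 0"
proof -
  have V: "in_V (tc c j) (xc c j) (tc c (Suc j))" using Omega_V[OF om] assms by auto
  have tp: "tc c j > 0" "tc c (Suc j) > 0" using V by (auto simp: in_V_def)
  have Ae: "A = complex_of_real (tc c j) * cis (theta c j)" unfolding A_def using assms n by (intro vertex_eq) auto
  have Be: "B = complex_of_real (tc c (Suc j)) * cis (theta c j + AA c j)"
    unfolding B_def using assms n vertex_eq[of "Suc j"] theta_Suc'[of j c] by auto
  show "(Re A)\<^sup>2 + (Im A)\<^sup>2 = (tc c j)\<^sup>2" unfolding Ae using sc2 by simp
  show "(Re B)\<^sup>2 + (Im B)\<^sup>2 = (tc c (Suc j))\<^sup>2" unfolding Be using sc2 by simp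
  have "(Re B - Re A)\<^sup>2 + (Im B - Im A)\<^sup>2 = (cmod (B - A))\<^sup>2" by (simp add: cmod_power2)
  also have "\<dots> = (tc c (Suc j))\<^sup>2 + (tc c j)\<^sup>2 - 2 * tc c (Suc j) * tc c j * cos (AA c j)"
    unfolding Ae Be by (rule cmod_cis_diff)
  also have "2 * tc c (Suc j) * tc c j * cos (AA c j) = (tc c j)\<^sup>2 + (tc c (Suc j))\<^sup>2 - (xc c j)\<^sup>2"
    using alpha_props(3)[OF V] tp by (simp add: AA_def field_simps)
  finally show "(Re B - Re A)\<^sup>2 + (Im B - Im A)\<^sup>2 = (xc c j)\<^sup>2" by simp
  have "Re A * Im B - Im A * Re B = tc c j * tc c (Suc j) * (sin (theta c j + AA c j) * cos (theta c j) - cos (theta c j + AA c j) * sin (theta c j))"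
    unfolding Ae Be by (simp add: algebra_simps)
  also have "sin (theta c j + AA c j) * cos (theta c j) - cos (theta c j + AA c j) * sin (theta c j) = sin (AA c j)"
    using sin_diff[of "theta c j + AA c j" "theta c j"] by simp
  finally show "Re A * Im B - Im A * Re B \<noteq> 0"
    using tp AA_props[OF om assms(1,2)] by simp
qed

lemma antipode_order:
  assumes ins: "inscribable n c" and k: "k \<in> {1..n-3}" and k': "k' \<in> {1..n-3}"
    and F: "(tc c (Suc (Suc k)))\<^sup>2 = (tc c (Suc k))\<^sup>2 + (xc c (Suc k))\<^sup>2"
    and B: "(tc c k')\<^sup>2 = (xc c k')\<^sup>2 + (tc c (Suc k'))\<^sup>2"
  shows "Suc (Suc k) = k'"
proof -
  obtain z r where r: "0 < r" "\<forall>j\<in>{1..n}. dist (vertex n c j) z = r"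
    using ins unfolding inscribable_def by blast
  have "dist 0 z = r" using r(2)[rule_format, of n] n by (simp add: vertex_def)
  then have rz: "r = cmod z" by simp
  have circ: "(Re (vertex n c j))\<^sup>2 + (Im (vertex n c j))\<^sup>2 = 2 * (Re (vertex n c j) * Re z + Im (vertex n c j) * Im z)"
    if "1 \<le> j" "j \<le> n" for j
  proof -
    have "dist (vertex n c j) z = cmod z" using r(2) that rz by auto
    then show ?thesis by (simp only: dist_cmod_iff)
  qed
  have f1: "Re (vertex n c (Suc (Suc k))) = 2 * Re z \<and> Im (vertex n c (Suc (Suc k))) = 2 * Im z"
  proof -
    note vf = vertex_facts[of "Suc k"]
    have j: "1 \<le> Suc k" "Suc k \<le> n - 2" using k by auto
    show ?thesis
    proof (rule thales)
      show "(Re (vertex n c (Suc k)))\<^sup>2 + (Im (vertex n c (Suc k)))\<^sup>2 = 2 * (Re (vertex n c (Suc k)) * Re z + Im (vertex n c (Suc k)) * Im z)"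
        using circ j by auto
      show "(Re (vertex n c (Suc (Suc k))))\<^sup>2 + (Im (vertex n c (Suc (Suc k))))\<^sup>2 = 2 * (Re (vertex n c (Suc (Suc k))) * Re z + Im (vertex n c (Suc (Suc k))) * Im z)"
        using circ j k by auto
      show "Re (vertex n c (Suc k)) * Im (vertex n c (Suc (Suc k))) - Im (vertex n c (Suc k)) * Re (vertex n c (Suc (Suc k))) \<noteq> 0"
        using vf(4) j by auto
      have "(Re (vertex n c (Suc (Suc k))) - Re (vertex n c (Suc k)))\<^sup>2 + (Im (vertex n c (Suc (Suc k))) - Im (vertex n c (Suc k)))\<^sup>2
          = ((Re (vertex n c (Suc (Suc k))))\<^sup>2 + (Im (vertex n c (Suc (Suc k))))\<^sup>2) - ((Re (vertex n c (Suc k)))\<^sup>2 + (Im (vertex n c (Suc k)))\<^sup>2)"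
        using vf(1-3) j F by simp
      then show "Re (vertex n c (Suc k)) * Re (vertex n c (Suc (Suc k))) + Im (vertex n c (Suc k)) * Im (vertex n c (Suc (Suc k)))
          = (Re (vertex n c (Suc k)))\<^sup>2 + (Im (vertex n c (Suc k)))\<^sup>2"
        by (simp add: power2_eq_square algebra_simps)
    qed
  qed
  have f2: "Re (vertex n c k') = 2 * Re z \<and> Im (vertex n c k') = 2 * Im z"
  proof -
    note vf = vertex_facts[of k']
    have j: "1 \<le> k'" "k' \<le> n - 2" using k' by auto
    show ?thesis
    proof (rule thales)
      show "(Re (vertex n c (Suc k')))\<^sup>2 + (Im (vertex n c (Suc k')))\<^sup>2 = 2 * (Re (vertex n c (Suc k')) * Re z + Im (vertex n c (Suc k')) * Im z)"
        using circ j by auto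
      show "(Re (vertex n c k'))\<^sup>2 + (Im (vertex n c k'))\<^sup>2 = 2 * (Re (vertex n c k') * Re z + Im (vertex n c k') * Im z)"
        using circ j by auto
      show "Re (vertex n c (Suc k')) * Im (vertex n c k') - Im (vertex n c (Suc k')) * Re (vertex n c k') \<noteq> 0"
        using vf(4) j by (auto simp: algebra_simps)
      have "(Re (vertex n c (Suc k')) - Re (vertex n c k'))\<^sup>2 + (Im (vertex n c (Suc k')) - Im (vertex n c k'))\<^sup>2
          = ((Re (vertex n c k'))\<^sup>2 + (Im (vertex n c k'))\<^sup>2) - ((Re (vertex n c (Suc k')))\<^sup>2 + (Im (vertex n c (Suc k')))\<^sup>2)"
        using vf(1-3) j B by simp
      then show "Re (vertex n c (Suc k')) * Re (vertex n c k') + Im (vertex n c (Suc k')) * Im (vertex n c k')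
          = (Re (vertex n c (Suc k')))\<^sup>2 + (Im (vertex n c (Suc k')))\<^sup>2"
        by (simp add: power2_eq_square algebra_simps)
    qed
  qed
  have eqv: "vertex n c (Suc (Suc k)) = vertex n c k'" using f1 f2 by (simp add: complex_eq_iff)
  show ?thesis
  proof (rule ccontr)
    assume ne: "Suc (Suc k) \<noteq> k'"
    show False
    proof (cases "Suc (Suc k) < k'")
      case True
      have "k' \<le> n - 1" "1 \<le> Suc (Suc k)" using k' by auto
      then show False using vertex_distinct[OF _ True _ eqv] by auto
    next
      case False then have "k' < Suc (Suc k)" using ne by auto
      moreover have "Suc (Suc k) \<le> n - 1" "1 \<le> k'" using k k' by auto
      ultimately show False using vertex_distinct[OF _ _ _ eqv[symmetric]] by auto
    qed
  qed
qed

end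

lemma open_vimage_pts:
  fixes f :: "'a::t2_space \<Rightarrow> 'b::topological_space"
  assumes "open S" "\<And>x. f x \<in> S \<Longrightarrow> isCont f x"
  shows "open (f -` S)"
  unfolding open_subopen[of "f -` S"]
proof
  fix x assume "x \<in> f -` S"
  then have "f x \<in> S" by simp
  then obtain s where "open s" "x \<in> s" "\<forall>x'\<in>s. f x' \<in> S"
    using assms(2)[OF \<open>f x \<in> S\<close>] assms(1) unfolding continuous_at_open by blast
  then show "\<exists>T. open T \<and> x \<in> T \<and> T \<subseteq> f -` S" by blast
qed

lemma open_restr_isCont:
  fixes f :: "'a::t2_space \<Rightarrow> 'b::topological_space"
  assumes "open A" "\<And>x. x \<in> A \<Longrightarrow> isCont f x" "open S"
  shows "open {x \<in> A. f x \<in> S}"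
proof -
  have "continuous_on A f" using assms(2) by (intro continuous_at_imp_continuous_on) auto
  then have "open (f -` S \<inter> A)" using continuous_on_open_vimage[OF assms(1), of f] assms(3) by blast
  moreover have "f -` S \<inter> A = {x \<in> A. f x \<in> S}" by auto
  ultimately show ?thesis by simp
qed

lemma open_Collect_finite_ball:
  assumes "finite K" "\<And>k. k \<in> K \<Longrightarrow> open {x. P k x}"
  shows "open {x. \<forall>k\<in>K. P k x}"
proof -
  have "{x. \<forall>k\<in>K. P k x} = (\<Inter>k\<in>K. {x. P k x})" by auto
  then show ?thesis using assms by auto
qed

lemma open_pos:
  fixes f :: "'a::t2_space \<Rightarrow> real"
  assumes "\<And>x. isCont f x"
  shows "open {x. 0 < f x}"
proof -
  have "continuous_on UNIV f" using assms by (intro continuous_at_imp_continuous_on) auto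
  then show ?thesis using open_Collect_less[of "\<lambda>x. 0" f] by simp
qed

locale PS =
  fixes n :: nat and idx :: "nat \<Rightarrow> 'm::finite"
  assumes n4: "n \<ge> 4" and bij: "bij_betw idx {..<2 * n - 3} (UNIV :: 'm set)"
begin

abbreviation "NN \<equiv> 2 * n - 3"

definition T :: "nat \<Rightarrow> real^'m \<Rightarrow> real" where "T k \<omega> = tc (coords idx \<omega>) k"
definition X :: "nat \<Rightarrow> real^'m \<Rightarrow> real" where "X k \<omega> = xc (coords idx \<omega>) k"
definition iv :: "'m \<Rightarrow> nat" where "iv q = inv_into {..<NN} idx q"

lemma T_eq: "T k \<omega> = \<omega> $ idx (2 * k - 2)" by (simp add: T_def tc_def coords_def)
lemma X_eq: "X k \<omega> = \<omega> $ idx (2 * k - 1)" by (simp add: X_def xc_def coords_def)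

lemma iv_idx: "i < NN \<Longrightarrow> iv (idx i) = i"
  using bij unfolding iv_def bij_betw_def by (simp add: inv_into_f_f)
lemma iv_lt: "iv q < NN"
  using bij unfolding iv_def bij_betw_def by (metis UNIV_I inv_into_into lessThan_iff)
lemma idx_iv: "idx (iv q) = q"
  using bij unfolding iv_def bij_betw_def by (simp add: f_inv_into_f)

lemma isCont_coord: "isCont (\<lambda>\<omega>::real^'m. \<omega> $ i) x"
  by (intro continuous_intros)

lemma isCont_T: "isCont (T k) x" unfolding T_eq[abs_def] by (intro continuous_intros)
lemma isCont_X: "isCont (X k) x" unfolding X_eq[abs_def] by (intro continuous_intros)

lemma nice_T: "nice U (T k)" unfolding T_eq[abs_def] by (rule ncoord)
lemma nice_X: "nice U (X k)" unfolding X_eq[abs_def] by (rule ncoord)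

lemma Omega_set_alt: "Omega_set idx n = {\<omega>. in_Omega n (coords idx \<omega>)}"
  by (simp add: Omega_set_def)

definition Wpos :: "(real^'m) set" where
  "Wpos = {\<omega>. (\<forall>i<NN. 0 < \<omega> $ idx i) \<and>
      (\<forall>k\<in>{1..n-2}. in_V (T k \<omega>) (X k \<omega>) (T (Suc k) \<omega>))}"

lemma open_Wpos: "open Wpos"
proof -
  have o1: "open {\<omega>::real^'m. \<forall>i\<in>{..<NN}. 0 < \<omega> $ idx i}"
    by (rule open_Collect_finite_ball) (auto intro!: open_pos continuous_intros)
  have o2: "open {\<omega>. \<forall>k\<in>{1..n-2}. in_V (T k \<omega>) (X k \<omega>) (T (Suc k) \<omega>)}"
  proof (rule open_Collect_finite_ball)
    fix k
    have "{\<omega>. in_V (T k \<omega>) (X k \<omega>) (T (Suc k) \<omega>)} =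
      {\<omega>. 0 < T k \<omega>} \<inter> {\<omega>. 0 < X k \<omega> + T (Suc k) \<omega> - T k \<omega>} \<inter>
      {\<omega>. 0 < X k \<omega>} \<inter> {\<omega>. 0 < T k \<omega> + T (Suc k) \<omega> - X k \<omega>} \<inter>
      {\<omega>. 0 < T (Suc k) \<omega>} \<inter> {\<omega>. 0 < T k \<omega> + X k \<omega> - T (Suc k) \<omega>}"
      by (auto simp: in_V_def)
    moreover have "open \<dots>"
      by (intro open_Int open_pos continuous_intros isCont_T isCont_X)
    ultimately show "open {\<omega>. in_V (T k \<omega>) (X k \<omega>) (T (Suc k) \<omega>)}" by simp
  qed simp
  have "Wpos = {\<omega>::real^'m. \<forall>i\<in>{..<NN}. 0 < \<omega> $ idx i} \<inter> {\<omega>. \<forall>k\<in>{1..n-2}. in_V (T k \<omega>) (X k \<omega>) (T (Suc k) \<omega>)}"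
    unfolding Wpos_def by auto
  then show ?thesis using o1 o2 by auto
qed

lemma isCont_alpha_T:
  assumes V: "in_V (T k \<omega>) (X k \<omega>) (T (Suc k) \<omega>)"
  shows "isCont (\<lambda>\<omega>. alpha (T k \<omega>) (X k \<omega>) (T (Suc k) \<omega>)) \<omega>"
proof -
  define y where "y \<omega> = ((T k \<omega>)\<^sup>2 + (T (Suc k) \<omega>)\<^sup>2 - (X k \<omega>)\<^sup>2) / (2 * T k \<omega> * T (Suc k) \<omega>)" for \<omega>
  have yb: "-1 < y \<omega>" "y \<omega> < 1" using alpha_props(1,2)[OF V] by (auto simp: y_def)
  have ts: "2 * T k \<omega> * T (Suc k) \<omega> \<noteq> 0" using V by (auto simp: in_V_def)
  have c1: "isCont (\<lambda>\<omega>. 2 * T k \<omega> * T (Suc k) \<omega>) \<omega>"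
    by (intro isCont_mult isCont_T continuous_const)
  have c2: "isCont (\<lambda>\<omega>. (T k \<omega>)\<^sup>2 + (T (Suc k) \<omega>)\<^sup>2 - (X k \<omega>)\<^sup>2) \<omega>"
    by (intro isCont_diff isCont_add isCont_power isCont_T isCont_X)
  have "isCont y \<omega>" unfolding y_def[abs_def] by (rule isCont_divide[OF c2 c1 ts])
  then have "isCont (\<lambda>\<omega>. arccos (y \<omega>)) \<omega>"
    using isCont_arccos[OF yb] by (rule isCont_o2)
  then show ?thesis by (simp add: alpha_def y_def[abs_def])
qed

lemma open_Omega: "open (Omega_set idx n)"
proof -
  define g where "g \<omega> = (\<Sum>k=1..n-2. alpha (T k \<omega>) (X k \<omega>) (T (Suc k) \<omega>))" for \<omega>
  have "Omega_set idx n = {\<omega> \<in> Wpos. g \<omega> \<in> {..<2 * pi}}"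
    unfolding Omega_set_def in_Omega_def Wpos_def g_def T_def X_def
    by (auto simp: coords_def)
  moreover have "open {\<omega> \<in> Wpos. g \<omega> \<in> {..<2 * pi}}"
  proof (rule open_restr_isCont[OF open_Wpos _ open_lessThan])
    fix \<omega> assume "\<omega> \<in> Wpos"
    then show "isCont g \<omega>" unfolding g_def Wpos_def
      by (intro continuous_intros isCont_alpha_T) auto
  qed
  ultimately show ?thesis by simp
qed

end

definition solv :: "real \<Rightarrow> real \<Rightarrow> real \<Rightarrow> real \<Rightarrow> real" where
  "solv a b cc s = (- b + s * sqrt (b\<^sup>2 - 4 * a * cc)) / (2 * a)"

lemma quad_iff:
  fixes a b cc s y :: real
  assumes a: "a > 0" and s: "s = 1 \<or> s = -1" and sy: "s * (2 * a * y + b) > 0"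
  shows "a * y\<^sup>2 + b * y + cc = 0 \<longleftrightarrow> y = solv a b cc s"
proof -
  define D where "D = b\<^sup>2 - 4 * a * cc"
  have ss: "s * s = 1" using s by auto
  have key: "4 * a * (a * y\<^sup>2 + b * y + cc) = (2 * a * y + b)\<^sup>2 - D"
    by (simp add: D_def power2_eq_square algebra_simps)
  have "a * y\<^sup>2 + b * y + cc = 0 \<longleftrightarrow> (2 * a * y + b)\<^sup>2 = D"
    using key a by (metis eq_iff_diff_eq_0 mult_eq_0_iff zero_neq_numeral less_irrefl)
  also have "\<dots> \<longleftrightarrow> 2 * a * y + b = s * sqrt D"
  proof
    assume h: "(2 * a * y + b)\<^sup>2 = D"
    have "\<bar>2 * a * y + b\<bar> = sqrt D" using h by (metis real_sqrt_abs)
    moreover have "\<bar>2 * a * y + b\<bar> = s * (2 * a * y + b)" using s sy by auto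
    ultimately have "s * (2 * a * y + b) = sqrt D" by simp
    then have "s * (s * (2 * a * y + b)) = s * sqrt D" by simp
    then show "2 * a * y + b = s * sqrt D" using ss by (simp add: mult.assoc[symmetric])
  next
    assume h: "2 * a * y + b = s * sqrt D"
    then have "s * (2 * a * y + b) = sqrt D" using ss by (simp add: mult.assoc[symmetric])
    then have "sqrt D > 0" using sy by simp
    then have "D > 0" by simp
    have "(2 * a * y + b)\<^sup>2 = (s * s) * (sqrt D)\<^sup>2" using h by (simp add: power2_eq_square algebra_simps)
    then show "(2 * a * y + b)\<^sup>2 = D" using ss \<open>D > 0\<close> by simp
  qed
  also have "\<dots> \<longleftrightarrow> y = solv a b cc s"
    unfolding solv_def D_def[symmetric] using a by (auto simp: field_simps)
  finally show ?thesis .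
qed

locale CH0 = PS +
  fixes m :: nat
  assumes m1: "1 \<le> m" and m2: "m \<le> n - 2"
begin

definition J :: "nat set" where "J = {1..n-2} - {m}"
definition nb :: "nat \<Rightarrow> nat" where "nb j = (if m < j then j - 1 else Suc j)"
definition dd :: "nat \<Rightarrow> nat" where "dd j = (if m \<le> j then j - m else m - j)"
definition stp :: "nat \<Rightarrow> nat" where "stp j = (if m < j then j - 1 else j)"

definition cA where
  "cA j v \<omega> = (if m < j then T (j - 1) \<omega> * v else v * T (j + 2) \<omega>)"
definition cB where
  "cB j v \<omega> = (if m < j then T (j + 1) \<omega> * ((T (j - 1) \<omega>)\<^sup>2 + v\<^sup>2 - (T j \<omega>)\<^sup>2)
               else T j \<omega> * (v\<^sup>2 + (T (j + 2) \<omega>)\<^sup>2 - (T (j + 1) \<omega>)\<^sup>2))"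
definition cC where
  "cC j v \<omega> = (if m < j then T (j - 1) \<omega> * v * ((T (j + 1) \<omega>)\<^sup>2 - (T j \<omega>)\<^sup>2)
               else v * T (j + 2) \<omega> * ((T j \<omega>)\<^sup>2 - (T (j + 1) \<omega>)\<^sup>2))"
lemma J_range: "j \<in> J \<Longrightarrow> 1 \<le> j \<and> j \<le> n - 2 \<and> j \<noteq> m" by (auto simp: J_def)

lemma nb_range: "j \<in> J \<Longrightarrow> 1 \<le> nb j \<and> nb j \<le> n - 2 \<and> dd j = Suc (dd (nb j))"
  using m1 m2 by (auto simp: J_def nb_def dd_def)

lemma coeff_cong0:
  assumes "j \<in> J" "\<And>k. 1 \<le> k \<Longrightarrow> k \<le> n - 1 \<Longrightarrow> T k \<omega> = T k \<omega>'"
  shows "cA j v \<omega> = cA j v \<omega>'" "cB j v \<omega> = cB j v \<omega>'" "cC j v \<omega> = cC j v \<omega>'"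
proof -
  have r: "1 \<le> j" "j \<le> n - 2" "j \<noteq> m" using J_range[OF assms(1)] by auto
  have "T (j - 1) \<omega> = T (j - 1) \<omega>'" if "m < j" using that r m1 by (intro assms(2)) auto
  moreover have "T j \<omega> = T j \<omega>'" using r by (intro assms(2)) auto
  moreover have "T (j + 1) \<omega> = T (j + 1) \<omega>'" using r by (intro assms(2)) auto
  moreover have "T (j + 2) \<omega> = T (j + 2) \<omega>'" if "\<not> m < j" using that r m2 by (intro assms(2)) auto
  ultimately show "cA j v \<omega> = cA j v \<omega>'" "cB j v \<omega> = cB j v \<omega>'" "cC j v \<omega> = cC j v \<omega>'"
    by (auto simp: cA_def cB_def cC_def)
qed

end

locale CH = CH0 +
  fixes sg :: "nat \<Rightarrow> real"
  assumes sg: "\<And>j. sg j = 1 \<or> sg j = -1"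
begin

definition SolG where
  "SolG j v \<omega> = solv (cA j v \<omega>) (cB j v \<omega>) (cC j v \<omega>) (sg j)"

definition phi where
  "phi \<omega> = (\<chi> q. if odd (iv q) \<and> (iv q + 1) div 2 \<in> J
      then \<omega> $ q - SolG ((iv q + 1) div 2) (X (nb ((iv q + 1) div 2)) \<omega>) \<omega> else \<omega> $ q)"

fun Xr where
  "Xr 0 j w = X j w"
| "Xr (Suc d) j w = (if j \<in> J then X j w + SolG j (Xr d (nb j) w) w else X j w)"

definition Xpsi where "Xpsi j w = Xr (dd j) j w"

definition psi where
  "psi w = (\<chi> q. if odd (iv q) then Xpsi ((iv q + 1) div 2) w else w $ q)"

lemma Xpsi_m: "Xpsi m w = X m w" by (simp add: Xpsi_def dd_def)

lemma Xpsi_rec: "j \<in> J \<Longrightarrow> Xpsi j w = X j w + SolG j (Xpsi (nb j) w) w"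
  using nb_range[of j] by (simp add: Xpsi_def)

lemma Xpsi_notJ: "1 \<le> j \<Longrightarrow> j \<le> n - 2 \<Longrightarrow> j \<notin> J \<Longrightarrow> Xpsi j w = X j w"
  by (auto simp: J_def Xpsi_m)

lemma odd_index:
  assumes "odd i" "i < NN"
  shows "1 \<le> (i + 1) div 2 \<and> (i + 1) div 2 \<le> n - 2 \<and> i = 2 * ((i + 1) div 2) - 1"
  using assms n4 by (auto elim!: oddE)

lemma even_index:
  assumes "even i" "i < NN"
  shows "1 \<le> i div 2 + 1 \<and> i div 2 + 1 \<le> n - 1 \<and> i = 2 * (i div 2 + 1) - 2"
  using assms n4 by (auto elim!: evenE)

lemma T_index: "1 \<le> k \<Longrightarrow> k \<le> n - 1 \<Longrightarrow> iv (idx (2 * k - 2)) = 2 * k - 2"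
  using n4 by (intro iv_idx) auto
lemma X_index: "1 \<le> j \<Longrightarrow> j \<le> n - 2 \<Longrightarrow> iv (idx (2 * j - 1)) = 2 * j - 1"
  using n4 by (intro iv_idx) auto

lemma T_phi: "1 \<le> k \<Longrightarrow> k \<le> n - 1 \<Longrightarrow> T k (phi \<omega>) = T k \<omega>"
  unfolding T_eq phi_def using T_index[of k] by auto

lemma X_phi: "1 \<le> j \<Longrightarrow> j \<le> n - 2 \<Longrightarrow>
   X j (phi \<omega>) = (if j \<in> J then X j \<omega> - SolG j (X (nb j) \<omega>) \<omega> else X j \<omega>)"
  unfolding phi_def using X_index[of j]
  by (auto simp: X_eq[symmetric]) (auto simp: X_eq)

lemma T_psi: "1 \<le> k \<Longrightarrow> k \<le> n - 1 \<Longrightarrow> T k (psi w) = T k w"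
  unfolding T_eq psi_def using T_index[of k] by auto

lemma X_psi: "1 \<le> j \<Longrightarrow> j \<le> n - 2 \<Longrightarrow> X j (psi w) = Xpsi j w"
proof -
  assume j: "1 \<le> j" "j \<le> n - 2"
  have "odd (2 * j - 1)" "(2 * j - 1 + 1) div 2 = j" using j by auto
  then show ?thesis unfolding psi_def X_eq using X_index[OF j] by simp
qed

lemma coeff_cong:
  assumes "j \<in> J" "\<And>k. 1 \<le> k \<Longrightarrow> k \<le> n - 1 \<Longrightarrow> T k \<omega> = T k \<omega>'"
  shows "SolG j v \<omega> = SolG j v \<omega>'"
  using coeff_cong0[OF assms] by (simp add: SolG_def)

lemma Xpsi_phi: "1 \<le> j \<Longrightarrow> j \<le> n - 2 \<Longrightarrow> Xpsi j (phi \<omega>) = X j \<omega>"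
proof (induction "dd j" arbitrary: j)
  case 0
  then have "j = m" using m1 m2 by (auto simp: dd_def split: if_splits)
  then show ?case using X_phi[of m] m1 m2 by (simp add: Xpsi_m J_def)
next
  case (Suc d)
  have jJ: "j \<in> J" using Suc.hyps(2) Suc.prems by (auto simp: J_def dd_def)
  note nbr = nb_range[OF jJ]
  have IH: "Xpsi (nb j) (phi \<omega>) = X (nb j) \<omega>" using Suc.hyps nbr by auto
  have "SolG j (X (nb j) \<omega>) (phi \<omega>) = SolG j (X (nb j) \<omega>) \<omega>"
    using coeff_cong[OF jJ, of "phi \<omega>" \<omega>] T_phi by auto
  then show ?case using Xpsi_rec[OF jJ, of "phi \<omega>"] IH X_phi[of j \<omega>] Suc.prems jJ by simp
qed

lemma psi_phi: "psi (phi \<omega>) = \<omega>"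
proof (subst vec_eq_iff, rule allI)
  fix q
  define i where "i = iv q"
  have i: "i < NN" "idx i = q" using iv_lt idx_iv by (auto simp: i_def)
  show "psi (phi \<omega>) $ q = \<omega> $ q"
  proof (cases "odd i")
    case True
    note oi = odd_index[OF True i(1)]
    have "psi (phi \<omega>) $ q = Xpsi ((i + 1) div 2) (phi \<omega>)" using True by (simp add: psi_def i_def)
    also have "\<dots> = X ((i + 1) div 2) \<omega>" using oi by (intro Xpsi_phi) auto
    also have "\<dots> = \<omega> $ q" using oi i by (simp add: X_eq)
    finally show ?thesis .
  next
    case False
    then show ?thesis by (simp add: psi_def phi_def i_def)
  qed
qed

lemma phi_psi: "phi (psi w) = w"
proof (subst vec_eq_iff, rule allI)
  fix q
  define i where "i = iv q"
  have i: "i < NN" "idx i = q" using iv_lt idx_iv by (auto simp: i_def)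
  show "phi (psi w) $ q = w $ q"
  proof (cases "odd i")
    case True
    note oi = odd_index[OF True i(1)]
    define j where "j = (i + 1) div 2"
    have wq: "w $ q = X j w" using oi i by (simp add: X_eq j_def)
    show ?thesis
    proof (cases "j \<in> J")
      case jJ: True
      note nbr = nb_range[OF jJ]
      have "phi (psi w) $ q = psi w $ q - SolG j (X (nb j) (psi w)) (psi w)"
        using True jJ by (simp add: phi_def i_def j_def)
      also have "psi w $ q = Xpsi j w" using True by (simp add: psi_def i_def j_def)
      also have "X (nb j) (psi w) = Xpsi (nb j) w" using nbr by (intro X_psi) auto
      also have "SolG j (Xpsi (nb j) w) (psi w) = SolG j (Xpsi (nb j) w) w"
        using coeff_cong[OF jJ, of "psi w" w] T_psi by auto
      finally show ?thesis using Xpsi_rec[OF jJ, of w] wq by simp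
    next
      case False
      have "phi (psi w) $ q = psi w $ q" using False by (simp add: phi_def i_def j_def)
      also have "\<dots> = Xpsi j w" using True by (simp add: psi_def i_def j_def)
      also have "\<dots> = X j w" using Xpsi_notJ[OF _ _ False] oi by (simp add: j_def)
      finally show ?thesis using wq by simp
    qed
  next
    case False
    then show ?thesis by (simp add: psi_def phi_def i_def)
  qed
qed

end

lemma nice_minus:
  assumes f: "nice U f" and g: "nice U g" shows "nice U (\<lambda>x. f x - g x)"
proof -
  have "nice U (\<lambda>x. f x + (-1) * g x)" by (rule nice.nadd[OF f nice.nmult[OF nice.nconst g]])
  then show ?thesis by (rule nice.ncong) auto
qed

lemma nice_sq:
  assumes f: "nice U f" shows "nice U (\<lambda>x. (f x)\<^sup>2)"
proof -
  have "nice U (\<lambda>x. f x * f x)" by (rule nice.nmult[OF f f])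
  then show ?thesis by (rule nice.ncong) (auto simp: power2_eq_square)
qed

lemma nice_solv:
  assumes "nice U a" "nice U b" "nice U c" "\<forall>x\<in>U. a x > 0" "\<forall>x\<in>U. (b x)\<^sup>2 - 4 * a x * c x > 0"
  shows "nice U (\<lambda>x. solv (a x) (b x) (c x) s)"
proof (rule nice.ncong)
  show "nice U (\<lambda>x. ((-1) * b x + s * sqrt ((b x)\<^sup>2 - 4 * a x * c x)) * inverse (2 * a x))"
  proof -
    have a2: "nice U (\<lambda>x. 2 * a x)" by (rule nice.nmult[OF nice.nconst assms(1)])
    have ia: "nice U (\<lambda>x. inverse (2 * a x))" by (rule nice.ninv[OF a2]) (use assms(4) in auto)
    have d: "nice U (\<lambda>x. (b x)\<^sup>2 - 4 * a x * c x)"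
      by (rule nice_minus[OF nice_sq[OF assms(2)] nice.nmult[OF nice.nmult[OF nice.nconst assms(1)] assms(3)]])
    have sq: "nice U (\<lambda>x. sqrt ((b x)\<^sup>2 - 4 * a x * c x))" by (rule nice.nsqrt[OF d]) (use assms(5) in auto)
    have num: "nice U (\<lambda>x. (-1) * b x + s * sqrt ((b x)\<^sup>2 - 4 * a x * c x))"
      by (rule nice.nadd[OF nice.nmult[OF nice.nconst assms(2)] nice.nmult[OF nice.nconst sq]])
    show ?thesis by (rule nice.nmult[OF num ia])
  qed
  show "\<forall>x\<in>U. ((-1) * b x + s * sqrt ((b x)\<^sup>2 - 4 * a x * c x)) * inverse (2 * a x) = solv (a x) (b x) (c x) s"
    by (simp only: solv_def divide_inverse mult_minus1) blast
qed

lemma isCont_solv: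
  assumes "isCont a w" "isCont b w" "isCont c w" "a w \<noteq> 0"
  shows "isCont (\<lambda>x. solv (a x) (b x) (c x) s) w"
  unfolding solv_def using assms
  by (intro isCont_divide isCont_add isCont_mult isCont_minus isCont_diff isCont_power continuous_const
      isCont_o2[OF _ isCont_real_sqrt]) auto

lemma isCont_vec:
  fixes F :: "'a::t2_space \<Rightarrow> 'n::finite \<Rightarrow> real"
  assumes "\<And>q. isCont (\<lambda>x. F x q) a"
  shows "isCont (\<lambda>x. \<chi> q. F x q) a"
  using assms unfolding isCont_def by (auto intro: tendsto_vec_lambda[of _ "\<lambda>q. F a q"])

context CH0 begin

lemma gamma_quad:
  assumes "j \<in> J"
  shows "gamma_k (coords idx \<omega>) (stp j) = cA j (X (nb j) \<omega>) \<omega> * (X j \<omega>)\<^sup>2 + cB j (X (nb j) \<omega>) \<omega> * X j \<omega> + cC j (X (nb j) \<omega>) \<omega>"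
proof -
  have tx: "tc (coords idx \<omega>) k = T k \<omega>" "xc (coords idx \<omega>) k = X k \<omega>" for k
    by (simp_all add: T_def X_def)
  show ?thesis
  proof (cases "m < j")
    case True
    then have j: "j - 1 + 1 = j" "j - 1 + 2 = j + 1" using m1 by auto
    show ?thesis using True
      unfolding gamma_k_def tx stp_def nb_def cA_def cB_def cC_def Theta_def j
      by (simp add: algebra_simps power2_eq_square)
  next
    case False
    show ?thesis using False
      unfolding gamma_k_def tx stp_def nb_def cA_def cB_def cC_def Theta_def
      by (simp add: algebra_simps power2_eq_square)
  qed
qed

lemma stp_bij: "(\<forall>k\<in>{1..n-3}. P k) \<longleftrightarrow> (\<forall>j\<in>J. P (stp j))"
proof
  assume "\<forall>k\<in>{1..n-3}. P k"
  moreover have "stp j \<in> {1..n-3}" if "j \<in> J" for j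
    using that m1 m2 by (auto simp: J_def stp_def)
  ultimately show "\<forall>j\<in>J. P (stp j)" by blast
next
  assume h: "\<forall>j\<in>J. P (stp j)"
  show "\<forall>k\<in>{1..n-3}. P k"
  proof
    fix k assume k: "k \<in> {1..n-3}"
    show "P k"
    proof (cases "k < m")
      case True
      then have "k \<in> J" "stp k = k" using k m2 by (auto simp: J_def stp_def)
      then show ?thesis using h by metis
    next
      case False
      then have "Suc k \<in> J" "stp (Suc k) = k" using k m2 by (auto simp: J_def stp_def)
      then show ?thesis using h by metis
    qed
  qed
qed

lemma nice_coeffs:
  assumes "nice U V"
  shows "nice U (\<lambda>\<omega>. cA j (V \<omega>) \<omega>)" "nice U (\<lambda>\<omega>. cB j (V \<omega>) \<omega>)" "nice U (\<lambda>\<omega>. cC j (V \<omega>) \<omega>)"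
  unfolding cA_def cB_def cC_def
  by (cases "m < j"; simp; intro nice.nmult nice.nadd nice_minus nice_sq nice_T assms)+

lemma isCont_coeffs:
  assumes "isCont V w"
  shows "isCont (\<lambda>\<omega>. cA j (V \<omega>) \<omega>) w" "isCont (\<lambda>\<omega>. cB j (V \<omega>) \<omega>) w" "isCont (\<lambda>\<omega>. cC j (V \<omega>) \<omega>) w"
  unfolding cA_def cB_def cC_def
  by (cases "m < j"; simp; intro isCont_mult isCont_add isCont_diff isCont_power isCont_T assms)+

end

context CH begin

definition cnd where
  "cnd j \<omega> \<longleftrightarrow> cA j (X (nb j) \<omega>) \<omega> > 0
     \<and> (cB j (X (nb j) \<omega>) \<omega>)\<^sup>2 - 4 * cA j (X (nb j) \<omega>) \<omega> * cC j (X (nb j) \<omega>) \<omega> > 0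
     \<and> sg j * (2 * cA j (X (nb j) \<omega>) \<omega> * X j \<omega> + cB j (X (nb j) \<omega>) \<omega>) > 0"

definition UU where "UU = Omega_set idx n \<inter> {\<omega>. \<forall>j\<in>J. cnd j \<omega>}"

lemma finite_J: "finite J" by (simp add: J_def)

lemma Gamma_U:
  assumes "\<omega> \<in> UU"
  shows "\<omega> \<in> Gamma_set idx n \<longleftrightarrow> (\<forall>j\<in>J. X j \<omega> = SolG j (X (nb j) \<omega>) \<omega>)"
proof -
  have om: "in_Omega n (coords idx \<omega>)" using assms by (simp add: UU_def Omega_set_def)
  have c: "\<And>j. j \<in> J \<Longrightarrow> cnd j \<omega>" using assms by (simp add: UU_def)
  have "\<omega> \<in> Gamma_set idx n \<longleftrightarrow> inscribable n (coords idx \<omega>)"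
    using assms by (simp add: Gamma_set_def UU_def)
  also have "\<dots> \<longleftrightarrow> (\<forall>k\<in>{1..n-3}. gamma_k (coords idx \<omega>) k = 0)" by (rule partA[OF om n4])
  also have "\<dots> \<longleftrightarrow> (\<forall>j\<in>J. gamma_k (coords idx \<omega>) (stp j) = 0)" by (rule stp_bij)
  also have "\<dots> \<longleftrightarrow> (\<forall>j\<in>J. X j \<omega> = SolG j (X (nb j) \<omega>) \<omega>)"
  proof (intro ball_cong refl)
    fix j assume j: "j \<in> J"
    have cj: "cnd j \<omega>" using c j .
    show "gamma_k (coords idx \<omega>) (stp j) = 0 \<longleftrightarrow> X j \<omega> = SolG j (X (nb j) \<omega>) \<omega>"
      unfolding gamma_quad[OF j] SolG_def
      by (rule quad_iff) (use cj sg in \<open>auto simp: cnd_def\<close>)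
  qed
  finally show ?thesis .
qed

lemma open_UU: "open UU"
proof -
  have "open {\<omega>. \<forall>j\<in>J. cnd j \<omega>}"
  proof (rule open_Collect_finite_ball[OF finite_J])
    fix j
    have cA: "isCont (\<lambda>\<omega>. cA j (X (nb j) \<omega>) \<omega>) x" for x by (rule isCont_coeffs[OF isCont_X])
    have cB: "isCont (\<lambda>\<omega>. cB j (X (nb j) \<omega>) \<omega>) x" for x by (rule isCont_coeffs[OF isCont_X])
    have cC: "isCont (\<lambda>\<omega>. cC j (X (nb j) \<omega>) \<omega>) x" for x by (rule isCont_coeffs[OF isCont_X])
    have "{\<omega>. cnd j \<omega>} = {\<omega>. 0 < cA j (X (nb j) \<omega>) \<omega>}
       \<inter> {\<omega>. 0 < (cB j (X (nb j) \<omega>) \<omega>)\<^sup>2 - 4 * cA j (X (nb j) \<omega>) \<omega> * cC j (X (nb j) \<omega>) \<omega>}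
       \<inter> {\<omega>. 0 < sg j * (2 * cA j (X (nb j) \<omega>) \<omega> * X j \<omega> + cB j (X (nb j) \<omega>) \<omega>)}"
      by (auto simp: cnd_def)
    moreover have "open \<dots>"
      by (intro open_Int open_pos isCont_mult isCont_add isCont_diff isCont_power continuous_const cA cB cC isCont_X)
    ultimately show "open {\<omega>. cnd j \<omega>}" by simp
  qed
  then show ?thesis unfolding UU_def using open_Omega by auto
qed

lemma smooth_phi: "smooth_on UU phi"
proof (rule nice_smooth[OF open_UU])
  fix q
  show "nice UU (\<lambda>\<omega>. phi \<omega> $ q)"
  proof (cases "odd (iv q) \<and> (iv q + 1) div 2 \<in> J")
    case True
    define j where "j = (iv q + 1) div 2"
    have jJ: "j \<in> J" using True unfolding j_def by blast
    have "nice UU (\<lambda>\<omega>. \<omega> $ q - SolG j (X (nb j) \<omega>) \<omega>)"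
      unfolding SolG_def
      by (rule nice_minus[OF nice.ncoord nice_solv[OF nice_coeffs(1)[OF nice_X] nice_coeffs(2)[OF nice_X] nice_coeffs(3)[OF nice_X]]])
        (use jJ in \<open>auto simp: UU_def cnd_def\<close>)
    moreover have "phi \<omega> $ q = \<omega> $ q - SolG j (X (nb j) \<omega>) \<omega>" for \<omega>
      unfolding phi_def vec_lambda_beta if_P[OF True] j_def ..
    ultimately show ?thesis by simp
  next
    case False
    have "phi \<omega> $ q = \<omega> $ q" for \<omega>
      unfolding phi_def vec_lambda_beta if_not_P[OF False] ..
    then show ?thesis by (simp add: nice.ncoord)
  qed
qed

definition VV where "VV = phi ` UU"

lemma VV_eq: "VV = psi -` UU"
proof
  show "VV \<subseteq> psi -` UU" unfolding VV_def using psi_phi by auto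
  show "psi -` UU \<subseteq> VV" unfolding VV_def
  proof
    fix w assume "w \<in> psi -` UU"
    then show "w \<in> phi ` UU" using phi_psi[of w] by (metis image_eqI vimageE)
  qed
qed

lemma Vcond:
  assumes "psi w \<in> UU" "j \<in> J"
  shows "cA j (Xpsi (nb j) w) w > 0"
    "(cB j (Xpsi (nb j) w) w)\<^sup>2 - 4 * cA j (Xpsi (nb j) w) w * cC j (Xpsi (nb j) w) w > 0"
proof -
  have c: "cnd j (psi w)" using assms by (simp add: UU_def)
  have x: "X (nb j) (psi w) = Xpsi (nb j) w" using nb_range[OF assms(2)] by (intro X_psi) auto
  have tt: "\<And>k. 1 \<le> k \<Longrightarrow> k \<le> n - 1 \<Longrightarrow> T k (psi w) = T k w" by (rule T_psi)
  note cc = coeff_cong0[OF assms(2) tt, of "Xpsi (nb j) w"]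
  show "cA j (Xpsi (nb j) w) w > 0"
    "(cB j (Xpsi (nb j) w) w)\<^sup>2 - 4 * cA j (Xpsi (nb j) w) w * cC j (Xpsi (nb j) w) w > 0"
    using c cc x by (simp_all add: cnd_def)
qed

lemma isCont_Xpsi:
  assumes "psi w \<in> UU"
  shows "1 \<le> j \<Longrightarrow> j \<le> n - 2 \<Longrightarrow> isCont (Xpsi j) w"
proof (induction "dd j" arbitrary: j)
  case 0
  then have "j = m" using m1 m2 by (auto simp: dd_def split: if_splits)
  then show ?case by (simp add: Xpsi_m[abs_def] isCont_X)
next
  case (Suc d)
  have jJ: "j \<in> J" using Suc.hyps(2) Suc.prems by (auto simp: J_def dd_def)
  note nbr = nb_range[OF jJ]
  have IH: "isCont (Xpsi (nb j)) w" using Suc.hyps nbr by auto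
  have "Xpsi j = (\<lambda>w. X j w + SolG j (Xpsi (nb j) w) w)" using Xpsi_rec[OF jJ] by auto
  moreover have "isCont (\<lambda>w. X j w + SolG j (Xpsi (nb j) w) w) w"
    unfolding SolG_def
    by (intro isCont_add isCont_X isCont_solv isCont_coeffs IH) (use Vcond[OF assms jJ] in auto)
  ultimately show ?case by simp
qed

lemma isCont_psi:
  assumes "psi w \<in> UU"
  shows "isCont psi w"
  unfolding psi_def
proof (rule isCont_vec)
  fix q
  show "isCont (\<lambda>x. if odd (iv q) then Xpsi ((iv q + 1) div 2) x else x $ q) w"
  proof (cases "odd (iv q)")
    case True
    note oi = odd_index[OF True iv_lt]
    show ?thesis using True isCont_Xpsi[OF assms] oi by simp
  next
    case False
    then show ?thesis by (simp add: isCont_coord)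
  qed
qed

lemma open_VV: "open VV"
  unfolding VV_eq by (rule open_vimage_pts[OF open_UU isCont_psi])

lemma nice_Xpsi:
  shows "1 \<le> j \<Longrightarrow> j \<le> n - 2 \<Longrightarrow> nice VV (Xpsi j)"
proof (induction "dd j" arbitrary: j)
  case 0
  then have "j = m" using m1 m2 by (auto simp: dd_def split: if_splits)
  then show ?case using nice_X by (simp add: Xpsi_m[abs_def])
next
  case (Suc d)
  have jJ: "j \<in> J" using Suc.hyps(2) Suc.prems by (auto simp: J_def dd_def)
  note nbr = nb_range[OF jJ]
  have IH: "nice VV (Xpsi (nb j))" using Suc.hyps nbr by auto
  have "Xpsi j = (\<lambda>w. X j w + SolG j (Xpsi (nb j) w) w)" using Xpsi_rec[OF jJ] by auto
  moreover have "nice VV (\<lambda>w. X j w + SolG j (Xpsi (nb j) w) w)"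
    unfolding SolG_def
    by (rule nice.nadd[OF nice_X nice_solv[OF nice_coeffs(1)[OF IH] nice_coeffs(2)[OF IH] nice_coeffs(3)[OF IH]]])
      (use Vcond[OF _ jJ] in \<open>auto simp: VV_eq\<close>)
  ultimately show ?case by simp
qed

lemma smooth_psi: "smooth_on VV psi"
proof (rule nice_smooth[OF open_VV])
  fix q
  show "nice VV (\<lambda>w. psi w $ q)"
  proof (cases "odd (iv q)")
    case True
    note oi = odd_index[OF True iv_lt]
    show ?thesis using True nice_Xpsi oi by (simp add: psi_def)
  next
    case False
    then show ?thesis by (simp add: psi_def nice.ncoord)
  qed
qed

lemma diffeo: "diffeo_between UU VV phi"
  unfolding diffeo_between_def
proof (intro exI[of _ psi] conjI)
  show "phi ` UU = VV" by (simp add: VV_def)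
  show "psi ` VV = UU" unfolding VV_def image_image psi_phi by simp
  show "\<forall>x\<in>UU. psi (phi x) = x" by (simp add: psi_phi)
  show "\<forall>y\<in>VV. phi (psi y) = y" by (simp add: phi_psi)
  show "smooth_on UU phi" by (rule smooth_phi)
  show "smooth_on VV psi" by (rule smooth_psi)
qed

definition LL where "LL = {w. \<forall>j\<in>J. w $ idx (2 * j - 1) = (0::real)}"

lemma image_Gamma: "phi ` (Gamma_set idx n \<inter> UU) = VV \<inter> LL"
proof -
  have key: "phi \<omega> \<in> LL \<longleftrightarrow> \<omega> \<in> Gamma_set idx n" if "\<omega> \<in> UU" for \<omega>
  proof -
    have "phi \<omega> \<in> LL \<longleftrightarrow> (\<forall>j\<in>J. X j (phi \<omega>) = 0)" by (simp add: LL_def X_eq)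
    also have "\<dots> \<longleftrightarrow> (\<forall>j\<in>J. X j \<omega> = SolG j (X (nb j) \<omega>) \<omega>)"
    proof (intro ball_cong refl)
      fix j assume j: "j \<in> J"
      show "X j (phi \<omega>) = 0 \<longleftrightarrow> X j \<omega> = SolG j (X (nb j) \<omega>) \<omega>"
        using X_phi[of j \<omega>] J_range[OF j] j by simp
    qed
    also have "\<dots> \<longleftrightarrow> \<omega> \<in> Gamma_set idx n" using Gamma_U[OF that] by simp
    finally show ?thesis .
  qed
  show ?thesis
  proof
    show "phi ` (Gamma_set idx n \<inter> UU) \<subseteq> VV \<inter> LL" using key by (auto simp: VV_def)
    show "VV \<inter> LL \<subseteq> phi ` (Gamma_set idx n \<inter> UU)" using key by (auto simp: VV_def)
  qed
qed

end

context CH begin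

lemma LL_sub: "subspace LL"
  unfolding LL_def subspace_def by auto

lemma dim_LL: "dim LL = n"
proof -
  define Q where "Q = idx ` ((\<lambda>j. 2 * j - 1) ` J)"
  define d where "d = (\<lambda>q. axis q (1::real)) ` (UNIV - Q)"
  have injA: "inj (\<lambda>q::'a. axis q (1::real))" by (auto simp: inj_on_def axis_eq_axis)
  have dB: "d \<subseteq> Basis" by (auto simp: d_def Basis_vec_def)
  have LLe: "LL = {x. \<forall>i\<in>Basis. i \<notin> d \<longrightarrow> x \<bullet> i = 0}"
  proof -
    have "LL = {x. \<forall>q\<in>Q. x $ q = 0}" by (auto simp: LL_def Q_def)
    also have "\<dots> = {x. \<forall>i\<in>Basis. i \<notin> d \<longrightarrow> x \<bullet> i = 0}"
    proof (intro Collect_cong iffI ballI impI)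
      fix x :: "real^'a" and i
      assume h: "\<forall>q\<in>Q. x $ q = 0" "i \<in> Basis" "i \<notin> d"
      obtain q where q: "i = axis q 1" using h(2) by (auto simp: Basis_vec_def)
      then have "q \<in> Q" using h(3) by (auto simp: d_def)
      then show "x \<bullet> i = 0" using h(1) q by (simp add: cart_eq_inner_axis[symmetric])
    next
      fix x :: "real^'a" and q
      assume h: "\<forall>i\<in>Basis. i \<notin> d \<longrightarrow> x \<bullet> i = 0" "q \<in> Q"
      have "axis q (1::real) \<notin> d" using h(2) by (auto simp: d_def axis_eq_axis)
      moreover have "axis q (1::real) \<in> Basis" by simp
      ultimately show "x $ q = 0" using h(1) by (simp add: cart_eq_inner_axis)
    qed
    finally show ?thesis .
  qed
  have cardU: "CARD('a) = NN" using bij_betw_same_card[OF bij] by simp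
  have Jsub: "(\<lambda>j. 2 * j - 1) ` J \<subseteq> {..<NN}" using n4 by (auto simp: J_def)
  have injI: "inj_on idx {..<NN}" using bij by (simp add: bij_betw_def)
  have "card Q = card ((\<lambda>j. 2 * j - 1) ` J)"
    unfolding Q_def by (rule card_image[OF inj_on_subset[OF injI Jsub]])
  also have "\<dots> = card J"
    by (rule card_image) (auto simp: inj_on_def J_def)
  also have "card J = n - 3"
  proof -
    have "card J = card {1..n-2} - 1" unfolding J_def using m1 m2 by (subst card_Diff_singleton) auto
    then show ?thesis by simp
  qed
  finally have cQ: "card Q = n - 3" .
  have "card d = card (UNIV - Q)" unfolding d_def by (rule card_image[OF inj_on_subset[OF injA]]) auto
  also have "\<dots> = CARD('a) - card Q" by (rule card_Diff_subset) auto
  finally have "card d = n" using cQ cardU n4 by simp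
  then have cd: "card d = n" .
  have D: "dim {x::real^'a. \<forall>i\<in>Basis. i \<notin> d \<longrightarrow> x \<bullet> i = 0} = card d" by (rule dim_substandard[OF dB])
  have "dim LL = card d" unfolding LLe by (rule D)
  then show ?thesis using cd by simp
qed

end

lemma fwd_deriv:
  fixes u1 u2 u3 u4 u5 :: real
  assumes "Theta u1 u2 u3 u4 u5 = 0"
  shows "u4 * (2 * (u1 * u2) * u4 + u5 * (u1\<^sup>2 + u2\<^sup>2 - u3\<^sup>2)) = u1 * u2 * (u4\<^sup>2 + u3\<^sup>2 - u5\<^sup>2)"
proof -
  have "u4 * u5 * (u1\<^sup>2 + u2\<^sup>2 - u3\<^sup>2) = - (u1 * u2 * (u4\<^sup>2 + u5\<^sup>2 - u3\<^sup>2))"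
    using assms unfolding Theta_def by linarith
  then show ?thesis by (simp add: algebra_simps power2_eq_square)
qed

lemma bwd_deriv:
  fixes u1 u2 u3 u4 u5 :: real
  assumes "Theta u1 u2 u3 u4 u5 = 0"
  shows "u2 * (2 * (u4 * u5) * u2 + u1 * (u4\<^sup>2 + u5\<^sup>2 - u3\<^sup>2)) = u4 * u5 * (u2\<^sup>2 - u1\<^sup>2 + u3\<^sup>2)"
proof -
  have "u1 * u2 * (u4\<^sup>2 + u5\<^sup>2 - u3\<^sup>2) = - (u4 * u5 * (u1\<^sup>2 + u2\<^sup>2 - u3\<^sup>2))"
    using assms unfolding Theta_def by linarith
  then show ?thesis by (simp add: algebra_simps power2_eq_square)
qed


context PS begin

lemma pos_T: "\<omega> \<in> Omega_set idx n \<Longrightarrow> 1 \<le> k \<Longrightarrow> k \<le> n - 1 \<Longrightarrow> T k \<omega> > 0"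
  unfolding Omega_set_def in_Omega_def T_def tc_def using n4 by auto

lemma pos_X: "\<omega> \<in> Omega_set idx n \<Longrightarrow> 1 \<le> k \<Longrightarrow> k \<le> n - 2 \<Longrightarrow> X k \<omega> > 0"
  unfolding Omega_set_def in_Omega_def X_def xc_def using n4 by auto

lemma gamma_T: "gamma_k (coords idx \<omega>) k = Theta (T k \<omega>) (X k \<omega>) (T (k+1) \<omega>) (X (k+1) \<omega>) (T (k+2) \<omega>)"
  by (simp add: gamma_k_def T_def X_def)

lemma local_chart:
  assumes p: "p \<in> Gamma_set idx n"
  shows "\<exists>U V \<phi> L. open U \<and> p \<in> U \<and> open V \<and> diffeo_between U V \<phi> \<and>
        subspace L \<and> dim L = n \<and> \<phi> ` (Gamma_set idx n \<inter> U) = V \<inter> L"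
proof -
  have pO: "p \<in> Omega_set idx n" and ins: "inscribable n (coords idx p)"
    using p by (auto simp: Gamma_set_def)
  have om: "in_Omega n (coords idx p)" using pO by (simp add: Omega_set_def)
  have gam: "\<And>k. k \<in> {1..n-3} \<Longrightarrow> gamma_k (coords idx p) k = 0"
    using partA[OF om n4] ins by auto
  define Bb where "Bb = {k\<in>{1..n-3}. (T k p)\<^sup>2 = (X k p)\<^sup>2 + (T (Suc k) p)\<^sup>2}"
  define m where "m = (if Bb = {} then n - 2 else Min Bb)"
  have fB: "finite Bb" by (simp add: Bb_def)
  have mB: "Bb \<noteq> {} \<Longrightarrow> m \<in> Bb \<and> (\<forall>k\<in>Bb. m \<le> k)" using fB by (simp add: m_def)
  have m12: "1 \<le> m" "m \<le> n - 2"
  proof (atomize (full), cases "Bb = {}")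
    case True then show "1 \<le> m \<and> m \<le> n - 2" using n4 by (simp add: m_def)
  next
    case False then have "m \<in> Bb" using mB by auto
    then show "1 \<le> m \<and> m \<le> n - 2" by (auto simp: Bb_def)
  qed
  interpret C0: CH0 n idx m by unfold_locales (use m12 in auto)
  define D where "D j = 2 * C0.cA j (X (C0.nb j) p) p * X j p + C0.cB j (X (C0.nb j) p) p" for j
  define sg where "sg j = (if D j > 0 then (1::real) else -1)" for j
  interpret C: CH n idx m sg by unfold_locales (auto simp: sg_def)
  have Dne: "D j \<noteq> 0" if jJ: "j \<in> C0.J" for j
  proof
    assume D0: "D j = 0"
    show False
    proof (cases "m < j")
      case True
      define k where "k = j - 1"
      have jr: "1 \<le> j" "j \<le> n - 2" using C0.J_range[OF jJ] by auto
      have k: "k \<in> {1..n-3}" "m \<le> k" "Suc k = j" using True jr m12 by (auto simp: k_def)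
      have th: "Theta (T k p) (X k p) (T j p) (X j p) (T (Suc j) p) = 0"
        using gam[OF k(1)] k(3) by (simp add: gamma_T)
      have Dj: "D j = 2 * (T k p * X k p) * X j p + T (Suc j) p * ((T k p)\<^sup>2 + (X k p)\<^sup>2 - (T j p)\<^sup>2)"
        using True k by (simp add: D_def C0.cA_def C0.cB_def C0.nb_def k_def)
      have "T k p * X k p * ((X j p)\<^sup>2 + (T j p)\<^sup>2 - (T (Suc j) p)\<^sup>2) = 0"
        using fwd_deriv[OF th] D0 Dj by simp
      moreover have "T k p > 0" "X k p > 0" using pos_T[OF pO] pos_X[OF pO] k by auto
      ultimately have F: "(T (Suc j) p)\<^sup>2 = (T j p)\<^sup>2 + (X j p)\<^sup>2" by simp
      have "Bb \<noteq> {}"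
      proof
        assume "Bb = {}"
        then have "m = n - 2" by (simp add: m_def)
        then show False using k by auto
      qed
      then have mm: "m \<in> Bb" using mB by auto
      have "Suc (Suc k) = m"
        using antipode_order[OF om n4 ins k(1), of m] mm F k(3)
        by (auto simp: Bb_def T_def X_def)
      then show False using k by auto
    next
      case False
      then have jm: "j < m" using C0.J_range[OF jJ] by auto
      have jr: "1 \<le> j" "j \<le> n - 2" using C0.J_range[OF jJ] by auto
      have k: "j \<in> {1..n-3}" using jm m12 jr by auto
      have th: "Theta (T j p) (X j p) (T (Suc j) p) (X (Suc j) p) (T (Suc (Suc j)) p) = 0"
        using gam[OF k] by (simp add: gamma_T)
      have Dj: "D j = 2 * (X (Suc j) p * T (Suc (Suc j)) p) * X j p + T j p * ((X (Suc j) p)\<^sup>2 + (T (Suc (Suc j)) p)\<^sup>2 - (T (Suc j) p)\<^sup>2)"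
        using False by (simp add: D_def C0.cA_def C0.cB_def C0.nb_def)
      have "X (Suc j) p * T (Suc (Suc j)) p * ((X j p)\<^sup>2 - (T j p)\<^sup>2 + (T (Suc j) p)\<^sup>2) = 0"
        using bwd_deriv[OF th] D0 Dj by simp
      moreover have "X (Suc j) p > 0" "T (Suc (Suc j)) p > 0" using pos_T[OF pO] pos_X[OF pO] k jm m12 by auto
      ultimately have "(T j p)\<^sup>2 = (X j p)\<^sup>2 + (T (Suc j) p)\<^sup>2" by simp
      then have "j \<in> Bb" using k by (simp add: Bb_def)
      then have "m \<le> j" using mB by auto
      then show False using jm by simp
    qed
  qed
  have pU: "p \<in> C.UU"
    unfolding C.UU_def
  proof (intro IntI CollectI ballI)
    show "p \<in> Omega_set idx n" by fact
    fix j assume jJ: "j \<in> C0.J"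
    have jr: "1 \<le> j" "j \<le> n - 2" "j \<noteq> m" using C0.J_range[OF jJ] by auto
    have nbr: "1 \<le> C0.nb j" "C0.nb j \<le> n - 2" using C0.nb_range[OF jJ] by auto
    have aP: "C0.cA j (X (C0.nb j) p) p > 0"
    proof (cases "m < j")
      case True then show ?thesis
        using pos_T[OF pO, of "j - 1"] pos_X[OF pO, of "C0.nb j"] jr nbr m12 by (simp add: C0.cA_def)
    next
      case False then show ?thesis
        using pos_T[OF pO, of "j + 2"] pos_X[OF pO, of "C0.nb j"] jr nbr m12 by (simp add: C0.cA_def)
    qed
    have q0: "C0.cA j (X (C0.nb j) p) p * (X j p)\<^sup>2 + C0.cB j (X (C0.nb j) p) p * X j p + C0.cC j (X (C0.nb j) p) p = 0"
      using C0.gamma_quad[OF jJ, of p] gam C0.stp_bij[of "\<lambda>k. gamma_k (coords idx p) k = 0"] jJ by auto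
    have disc: "(C0.cB j (X (C0.nb j) p) p)\<^sup>2 - 4 * C0.cA j (X (C0.nb j) p) p * C0.cC j (X (C0.nb j) p) p = (D j)\<^sup>2"
    proof -
      have "(D j)\<^sup>2 - ((C0.cB j (X (C0.nb j) p) p)\<^sup>2 - 4 * C0.cA j (X (C0.nb j) p) p * C0.cC j (X (C0.nb j) p) p)
          = 4 * C0.cA j (X (C0.nb j) p) p * (C0.cA j (X (C0.nb j) p) p * (X j p)\<^sup>2 + C0.cB j (X (C0.nb j) p) p * X j p + C0.cC j (X (C0.nb j) p) p)"
        unfolding D_def by (simp add: power2_eq_square algebra_simps)
      then show ?thesis using q0 by simp
    qed
    have "sg j * D j > 0" using Dne[OF jJ] by (auto simp: sg_def)
    moreover have "(D j)\<^sup>2 > 0" using Dne[OF jJ] by simp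
    ultimately show "C.cnd j p" unfolding C.cnd_def using aP disc by (simp add: D_def)
  qed
  show ?thesis
    by (intro exI[of _ C.UU] exI[of _ C.VV] exI[of _ C.phi] exI[of _ C.LL] conjI
        C.open_UU pU C.open_VV C.diffeo C.LL_sub C.dim_LL C.image_Gamma)
qed

end

theorem proposition2p3:
  fixes n :: nat and idx :: "nat \<Rightarrow> 'm::finite"
  assumes "n \<ge> 4"
    and "bij_betw idx {..<2 * n - 3} (UNIV :: 'm set)"
  shows "Gamma_set idx n = {\<omega> \<in> Omega_set idx n. \<forall>k\<in>{1..n-3}. gamma_k (coords idx \<omega>) k = 0}
         \<and> smooth_submanifold (Gamma_set idx n) n"
proof
  interpret PS n idx by unfold_locales (use assms in auto)
  show "Gamma_set idx n = {\<omega> \<in> Omega_set idx n. \<forall>k\<in>{1..n-3}. gamma_k (coords idx \<omega>) k = 0}"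
    unfolding Gamma_set_def using partA[OF _ assms(1)] by (auto simp: Omega_set_def)
  show "smooth_submanifold (Gamma_set idx n) n"
    unfolding smooth_submanifold_def using local_chart by blast
qed

end
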